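(* Let $\Bbbk$ be a field and $\mathcal{C}$ an additive pivotal $\Bbbk$-category in which every indecomposable object is absolutely indecomposable and every element of the radical of the endomorphism ring of an indecomposable object is nilpotent. Let $V$ be an absolutely simple object, fix a decomposition $V\otimes V^*=\bigoplus_{k\in I}W_k$ into indecomposables with inclusions $i_k$, projections $p_k$ and idempotents $e_k=i_kp_k$. Let $j\in I$ be the unique index with $e_j\,\mathrm{coev}_V=\mathrm{coev}_V$ and $j'\in I$ the unique index with $\widetilde{\mathrm{ev}}_V\,e_{j'}=\widetilde{\mathrm{ev}}_V$. Then the following are equivalent: (1) $V$ is right ambidextrous; (2) $j=j'$; (3) $W_j^*\cong W_j$.
   Context: A pivotal $\Bbbk$-category has left duality $(V^*,\mathrm{coev}_V:\mathbb{1}\to V\otimes V^*,\mathrm{ev}_V:V^*\otimes V\to\mathbb{1})$ and compatible right duality $(\widetilde{\mathrm{coev}}_V:\mathbb{1}\to V^*\otimes V,\widetilde{\mathrm{ev}}_V:V\otimes V^*\to\mathbb{1})$; hom-sets are $\Bbbk$-vector spaces with bilinear composition and tensor product, and $\operatorname{End}(\mathbb{1})=\Bbbk$. For $f:V\to W$ the dual is $f^*=(\mathrm{ev}_W\otimes\mathrm{Id}_{V^*})(\mathrm{Id}_{W^*}\otimes f\otimes\mathrm{Id}_{V^*})(\mathrm{Id}_{W^*}\otimes\mathrm{coev}_V)$. Let $\phi_V=(\widetilde{\mathrm{ev}}_V\otimes\mathrm{Id}_{V^{**}})(\mathrm{Id}_V\otimes\mathrm{coev}_{V^*}):V\to V^{**}$.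 An absolutely simple object $V$ (one with $\operatorname{End}(V)=\Bbbk\,\mathrm{Id}_V$) is right ambidextrous if $f\,\mathrm{coev}_V=(\phi_V^{-1}\otimes\mathrm{Id}_{V^*})\,f^*\,\widetilde{\mathrm{coev}}_{V^*}$ for all $f\in\operatorname{End}_{\mathcal{C}}(V\otimes V^* )$. An object is absolutely indecomposable if its endomorphism ring modulo its radical is $\Bbbk$. *)

theory Defs
  imports Main "HOL.Modules"
begin

text \<open>Morphisms live in one
  type 'm (an abelian group), and Hom A B is the set of morphisms A to B;
  all hom-sets contain the common zero and are closed under the group and
  scalar operations of a k-module structure on 'm. Composition and tensor
  product are total operations on 'm; all axioms are relativised to the
  hom-sets. Every k-linear category embeds into this shape (take 'm to be
  the direct sum of all hom-spaces), so no generality is lost.\<close>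

record ('o, 'm, 'k) pcat =
  Hom   :: "'o \<Rightarrow> 'o \<Rightarrow> 'm set"
  cmp   :: "'m \<Rightarrow> 'm \<Rightarrow> 'm"      \<comment> \<open>cmp g f = g after f\<close>
  idm   :: "'o \<Rightarrow> 'm"
  smul  :: "'k \<Rightarrow> 'm \<Rightarrow> 'm"
  tobj  :: "'o \<Rightarrow> 'o \<Rightarrow> 'o"
  tmor  :: "'m \<Rightarrow> 'm \<Rightarrow> 'm"
  unito :: "'o"
  dual  :: "'o \<Rightarrow> 'o"
  ev    :: "'o \<Rightarrow> 'm"     \<comment> \<open>ev V : V* (x) V -> 1\<close>
  coev  :: "'o \<Rightarrow> 'm"     \<comment> \<open>coev V : 1 -> V (x) V*\<close>
  evt   :: "'o \<Rightarrow> 'm"     \<comment> \<open>right evaluation  V (x) V* -> 1\<close>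
  coevt :: "'o \<Rightarrow> 'm"     \<comment> \<open>right coevaluation 1 -> V* (x) V\<close>

text \<open>Dual morphism f* : W* -> V* of f : V -> W (left duality).\<close>
definition dualm :: "('o, 'm, 'k) pcat \<Rightarrow> 'o \<Rightarrow> 'o \<Rightarrow> 'm \<Rightarrow> 'm" where
  "dualm C V W f =
     cmp C (tmor C (ev C W) (idm C (dual C V)))
      (cmp C (tmor C (idm C (dual C W)) (tmor C f (idm C (dual C V))))
             (tmor C (idm C (dual C W)) (coev C V)))"

definition dualm_r :: "('o, 'm, 'k) pcat \<Rightarrow> 'o \<Rightarrow> 'o \<Rightarrow> 'm \<Rightarrow> 'm" where
  "dualm_r C V W f =
     cmp C (tmor C (idm C (dual C V)) (evt C W))
      (cmp C (tmor C (idm C (dual C V)) (tmor C f (idm C (dual C W))))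
             (tmor C (coevt C V) (idm C (dual C W))))"

definition pivotal_kcat :: "('o, 'm::ab_group_add, 'k::field) pcat \<Rightarrow> bool" where
  "pivotal_kcat C \<longleftrightarrow>
    \<comment> \<open>k-linear structure on hom-sets\<close>
    module (smul C) \<and>
    (\<forall>A B. 0 \<in> Hom C A B) \<and>
    (\<forall>A B f g. f \<in> Hom C A B \<longrightarrow> g \<in> Hom C A B \<longrightarrow> f + g \<in> Hom C A B) \<and>
    (\<forall>A B f c. f \<in> Hom C A B \<longrightarrow> smul C c f \<in> Hom C A B) \<and>
    \<comment> \<open>category\<close>
    (\<forall>A. idm C A \<in> Hom C A A) \<and>
    (\<forall>A B D f g. f \<in> Hom C A B \<longrightarrow> g \<in> Hom C B D \<longrightarrow> cmp C g f \<in> Hom C A D) \<and>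
    (\<forall>A B f. f \<in> Hom C A B \<longrightarrow> cmp C f (idm C A) = f \<and> cmp C (idm C B) f = f) \<and>
    (\<forall>A B D E f g h. f \<in> Hom C A B \<longrightarrow> g \<in> Hom C B D \<longrightarrow> h \<in> Hom C D E \<longrightarrow>
        cmp C h (cmp C g f) = cmp C (cmp C h g) f) \<and>
    \<comment> \<open>bilinearity of composition\<close>
    (\<forall>A B D f f' g c. f \<in> Hom C A B \<longrightarrow> f' \<in> Hom C A B \<longrightarrow> g \<in> Hom C B D \<longrightarrow>
        cmp C g (f + f') = cmp C g f + cmp C g f' \<and> cmp C g (smul C c f) = smul C c (cmp C g f)) \<and>
    (\<forall>A B D f g g' c. f \<in> Hom C A B \<longrightarrow> g \<in> Hom C B D \<longrightarrow> g' \<in> Hom C B D \<longrightarrow>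
        cmp C (g + g') f = cmp C g f + cmp C g' f \<and> cmp C (smul C c g) f = smul C c (cmp C g f)) \<and>
    \<comment> \<open>strict monoidal structure\<close>
    (\<forall>A B A' B' f g. f \<in> Hom C A B \<longrightarrow> g \<in> Hom C A' B' \<longrightarrow>
        tmor C f g \<in> Hom C (tobj C A A') (tobj C B B')) \<and>
    (\<forall>A B. tmor C (idm C A) (idm C B) = idm C (tobj C A B)) \<and>
    (\<forall>A B D A' B' D' f g f' g'. f \<in> Hom C A B \<longrightarrow> g \<in> Hom C B D \<longrightarrow>
        f' \<in> Hom C A' B' \<longrightarrow> g' \<in> Hom C B' D' \<longrightarrow>
        tmor C (cmp C g f) (cmp C g' f') = cmp C (tmor C g g') (tmor C f f')) \<and>
    (\<forall>A B A' B' f f' g c. f \<in> Hom C A B \<longrightarrow> f' \<in> Hom C A B \<longrightarrow> g \<in> Hom C A' B' \<longrightarrow>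
        tmor C (f + f') g = tmor C f g + tmor C f' g \<and>
        tmor C g (f + f') = tmor C g f + tmor C g f' \<and>
        tmor C (smul C c f) g = smul C c (tmor C f g) \<and>
        tmor C g (smul C c f) = smul C c (tmor C g f)) \<and>
    (\<forall>A B D. tobj C (tobj C A B) D = tobj C A (tobj C B D)) \<and>
    (\<forall>A. tobj C (unito C) A = A \<and> tobj C A (unito C) = A) \<and>
    (\<forall>A B A' B' A'' B'' f g h. f \<in> Hom C A B \<longrightarrow> g \<in> Hom C A' B' \<longrightarrow> h \<in> Hom C A'' B'' \<longrightarrow>
        tmor C (tmor C f g) h = tmor C f (tmor C g h)) \<and>
    (\<forall>A B f. f \<in> Hom C A B \<longrightarrow>
        tmor C (idm C (unito C)) f = f \<and> tmor C f (idm C (unito C)) = f) \<and>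
    \<comment> \<open>End(1) = k\<close>
    idm C (unito C) \<noteq> 0 \<and>
    (\<forall>f \<in> Hom C (unito C) (unito C). \<exists>c. f = smul C c (idm C (unito C))) \<and>
    \<comment> \<open>left duality\<close>
    (\<forall>V. coev C V \<in> Hom C (unito C) (tobj C V (dual C V)) \<and>
         ev C V \<in> Hom C (tobj C (dual C V) V) (unito C)) \<and>
    (\<forall>V. cmp C (tmor C (idm C V) (ev C V)) (tmor C (coev C V) (idm C V)) = idm C V) \<and>
    (\<forall>V. cmp C (tmor C (ev C V) (idm C (dual C V))) (tmor C (idm C (dual C V)) (coev C V))
          = idm C (dual C V)) \<and>
    \<comment> \<open>right duality\<close>
    (\<forall>V. coevt C V \<in> Hom C (unito C) (tobj C (dual C V) V) \<and>
         evt C V \<in> Hom C (tobj C V (dual C V)) (unito C)) \<and>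
    (\<forall>V. cmp C (tmor C (evt C V) (idm C V)) (tmor C (idm C V) (coevt C V)) = idm C V) \<and>
    (\<forall>V. cmp C (tmor C (idm C (dual C V)) (evt C V)) (tmor C (coevt C V) (idm C (dual C V)))
          = idm C (dual C V)) \<and>
    \<comment> \<open>strict duality on tensor products (both identifications (V W)* = W* V* are identities)\<close>
    (\<forall>V W. dual C (tobj C V W) = tobj C (dual C W) (dual C V)) \<and>
    (\<forall>V W. ev C (tobj C V W) =
        cmp C (ev C W) (tmor C (idm C (dual C W)) (tmor C (ev C V) (idm C W)))) \<and>
    (\<forall>V W. coev C (tobj C V W) =
        cmp C (tmor C (idm C V) (tmor C (coev C W) (idm C (dual C V)))) (coev C V)) \<and>
    (\<forall>V W. evt C (tobj C V W) =
        cmp C (evt C V) (tmor C (idm C V) (tmor C (evt C W) (idm C (dual C V))))) \<and>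
    (\<forall>V W. coevt C (tobj C V W) =
        cmp C (tmor C (idm C (dual C W)) (tmor C (coevt C V) (idm C W))) (coevt C W)) \<and>
    \<comment> \<open>compatibility of the two dualities on morphisms\<close>
    (\<forall>V W f. f \<in> Hom C V W \<longrightarrow> dualm C V W f = dualm_r C V W f)"

definition biproduct :: "('o, 'm::ab_group_add, 'k) pcat \<Rightarrow> 'o \<Rightarrow> 'o \<Rightarrow> 'o \<Rightarrow>
    'm \<Rightarrow> 'm \<Rightarrow> 'm \<Rightarrow> 'm \<Rightarrow> bool" where
  "biproduct C S A B i1 i2 p1 p2 \<longleftrightarrow>
     i1 \<in> Hom C A S \<and> i2 \<in> Hom C B S \<and> p1 \<in> Hom C S A \<and> p2 \<in> Hom C S B \<and>
     cmp C p1 i1 = idm C A \<and> cmp C p2 i2 = idm C B \<and>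
     cmp C p1 i2 = 0 \<and> cmp C p2 i1 = 0 \<and>
     cmp C i1 p1 + cmp C i2 p2 = idm C S"

definition additive_cat :: "('o, 'm::ab_group_add, 'k) pcat \<Rightarrow> bool" where
  "additive_cat C \<longleftrightarrow> (\<exists>Z. idm C Z = 0) \<and>
     (\<forall>A B. \<exists>S i1 i2 p1 p2. biproduct C S A B i1 i2 p1 p2)"

definition decomposition :: "('o, 'm::ab_group_add, 'k) pcat \<Rightarrow> 'o \<Rightarrow> 'i set \<Rightarrow>
    ('i \<Rightarrow> 'o) \<Rightarrow> ('i \<Rightarrow> 'm) \<Rightarrow> ('i \<Rightarrow> 'm) \<Rightarrow> bool" where
  "decomposition C X I W i p \<longleftrightarrow> finite I \<and>
     (\<forall>k\<in>I. i k \<in> Hom C (W k) X \<and> p k \<in> Hom C X (W k) \<and> cmp C (p k) (i k) = idm C (W k)) \<and>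
     (\<forall>k\<in>I. \<forall>l\<in>I. k \<noteq> l \<longrightarrow> cmp C (p k) (i l) = 0) \<and>
     (\<Sum>k\<in>I. cmp C (i k) (p k)) = idm C X"

text \<open>Zero objects are those with identity 0.\<close>
definition indecomposable :: "('o, 'm::ab_group_add, 'k) pcat \<Rightarrow> 'o \<Rightarrow> bool" where
  "indecomposable C W \<longleftrightarrow> idm C W \<noteq> 0 \<and>
     (\<forall>A B i1 i2 p1 p2. biproduct C W A B i1 i2 p1 p2 \<longrightarrow> idm C A = 0 \<or> idm C B = 0)"

definition radical :: "('o, 'm::ab_group_add, 'k) pcat \<Rightarrow> 'o \<Rightarrow> 'm set" where
  "radical C W = {f \<in> Hom C W W. \<forall>g \<in> Hom C W W. \<exists>h \<in> Hom C W W.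
      cmp C h (idm C W - cmp C g f) = idm C W \<and> cmp C (idm C W - cmp C g f) h = idm C W}"

text \<open>End(W)/rad(End W) = k, i.e. k -> End(W)/rad is bijective.\<close>
definition abs_indecomposable :: "('o, 'm::ab_group_add, 'k) pcat \<Rightarrow> 'o \<Rightarrow> bool" where
  "abs_indecomposable C W \<longleftrightarrow> idm C W \<notin> radical C W \<and>
     (\<forall>f \<in> Hom C W W. \<exists>c. f - smul C c (idm C W) \<in> radical C W)"

definition nilpotent_mor :: "('o, 'm::ab_group_add, 'k) pcat \<Rightarrow> 'o \<Rightarrow> 'm \<Rightarrow> bool" where
  "nilpotent_mor C W f \<longleftrightarrow> (\<exists>n. ((cmp C f) ^^ n) (idm C W) = 0)"

definition abs_simple :: "('o, 'm, 'k) pcat \<Rightarrow> 'o \<Rightarrow> bool" where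
  "abs_simple C V \<longleftrightarrow> (\<forall>f \<in> Hom C V V. \<exists>c. f = smul C c (idm C V))"

definition isomorphic :: "('o, 'm, 'k) pcat \<Rightarrow> 'o \<Rightarrow> 'o \<Rightarrow> bool" where
  "isomorphic C A B \<longleftrightarrow> (\<exists>f \<in> Hom C A B. \<exists>g \<in> Hom C B A.
      cmp C g f = idm C A \<and> cmp C f g = idm C B)"

definition inv_mor :: "('o, 'm, 'k) pcat \<Rightarrow> 'o \<Rightarrow> 'o \<Rightarrow> 'm \<Rightarrow> 'm" where
  "inv_mor C A B f = (THE g. g \<in> Hom C B A \<and> cmp C g f = idm C A \<and> cmp C f g = idm C B)"

text \<open>phi V : V -> V**.\<close>
definition phi :: "('o, 'm, 'k) pcat \<Rightarrow> 'o \<Rightarrow> 'm" where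
  "phi C V = cmp C (tmor C (evt C V) (idm C (dual C (dual C V))))
                   (tmor C (idm C V) (coev C (dual C V)))"

definition right_ambidextrous :: "('o, 'm, 'k) pcat \<Rightarrow> 'o \<Rightarrow> bool" where
  "right_ambidextrous C V \<longleftrightarrow>
     (let X = tobj C V (dual C V) in
      \<forall>f \<in> Hom C X X.
        cmp C f (coev C V) =
        cmp C (tmor C (inv_mor C V (dual C (dual C V)) (phi C V)) (idm C (dual C V)))
          (cmp C (dualm C X X f) (coevt C (dual C V))))"

end

theory Submission
  imports Defs
begin


locale pc =
  fixes C :: "('o, 'm::ab_group_add, 'k::field) pcat"
  assumes pk: "pivotal_kcat C"
begin

abbreviation H where "H \<equiv> Hom C"
abbreviation cm (infixr "\<cdot>" 80) where "g \<cdot> f \<equiv> cmp C g f"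
abbreviation tm (infixr "\<otimes>" 85) where "f \<otimes> g \<equiv> tmor C f g"
abbreviation to (infixr "\<odot>" 60) where "A \<odot> B \<equiv> tobj C A B"
abbreviation Id where "Id \<equiv> idm C"
abbreviation One where "One \<equiv> unito C"
abbreviation du where "du \<equiv> dual C"
abbreviation sm (infixr "*\<^sub>s" 75) where "c *\<^sub>s f \<equiv> smul C c f"

lemmas pkD = pk[unfolded pivotal_kcat_def]
lemmas r0 = pkD
lemmas c1 = r0[THEN conjunct1]
lemmas r1 = r0[THEN conjunct2]
lemmas c2 = r1[THEN conjunct1]
lemmas r2 = r1[THEN conjunct2]
lemmas c3 = r2[THEN conjunct1]
lemmas r3 = r2[THEN conjunct2]
lemmas c4 = r3[THEN conjunct1]
lemmas r4 = r3[THEN conjunct2]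
lemmas c5 = r4[THEN conjunct1]
lemmas r5 = r4[THEN conjunct2]
lemmas c6 = r5[THEN conjunct1]
lemmas r6 = r5[THEN conjunct2]
lemmas c7 = r6[THEN conjunct1]
lemmas r7 = r6[THEN conjunct2]
lemmas c8 = r7[THEN conjunct1]
lemmas r8 = r7[THEN conjunct2]
lemmas c9 = r8[THEN conjunct1]
lemmas r9 = r8[THEN conjunct2]
lemmas c10 = r9[THEN conjunct1]
lemmas r10 = r9[THEN conjunct2]
lemmas c11 = r10[THEN conjunct1]
lemmas r11 = r10[THEN conjunct2]
lemmas c12 = r11[THEN conjunct1]
lemmas r12 = r11[THEN conjunct2]
lemmas c13 = r12[THEN conjunct1]
lemmas r13 = r12[THEN conjunct2]
lemmas c14 = r13[THEN conjunct1]
lemmas r14 = r13[THEN conjunct2]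
lemmas c15 = r14[THEN conjunct1]
lemmas r15 = r14[THEN conjunct2]
lemmas c16 = r15[THEN conjunct1]
lemmas r16 = r15[THEN conjunct2]
lemmas c17 = r16[THEN conjunct1]
lemmas r17 = r16[THEN conjunct2]
lemmas c18 = r17[THEN conjunct1]
lemmas r18 = r17[THEN conjunct2]
lemmas c19 = r18[THEN conjunct1]
lemmas r19 = r18[THEN conjunct2]
lemmas c20 = r19[THEN conjunct1]
lemmas r20 = r19[THEN conjunct2]
lemmas c21 = r20[THEN conjunct1]
lemmas r21 = r20[THEN conjunct2]
lemmas c22 = r21[THEN conjunct1]
lemmas r22 = r21[THEN conjunct2]
lemmas c23 = r22[THEN conjunct1]
lemmas r23 = r22[THEN conjunct2]
lemmas c24 = r23[THEN conjunct1]
lemmas r24 = r23[THEN conjunct2]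
lemmas c25 = r24[THEN conjunct1]
lemmas r25 = r24[THEN conjunct2]
lemmas c26 = r25[THEN conjunct1]
lemmas r26 = r25[THEN conjunct2]
lemmas c27 = r26[THEN conjunct1]
lemmas r27 = r26[THEN conjunct2]
lemmas c28 = r27[THEN conjunct1]
lemmas r28 = r27[THEN conjunct2]
lemmas c29 = r28[THEN conjunct1]
lemmas r29 = r28[THEN conjunct2]
lemmas c30 = r29[THEN conjunct1]
lemmas r30 = r29[THEN conjunct2]
lemmas c31 = r30[THEN conjunct1]
lemmas r31 = r30[THEN conjunct2]
lemmas c32 = r31
lemma mod: "module (smul C)" using c1 by blast

lemma zero_H[simp]: "0 \<in> H A B" using c2 by blast
lemma add_H: "f \<in> H A B \<Longrightarrow> g \<in> H A B \<Longrightarrow> f + g \<in> H A B" using c3 by blast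
lemma sm_H: "f \<in> H A B \<Longrightarrow> c *\<^sub>s f \<in> H A B" using c4 by blast
lemma id_H: "Id A \<in> H A A" using c5 by blast
lemma cm_H: "f \<in> H A B \<Longrightarrow> g \<in> H B D \<Longrightarrow> g \<cdot> f \<in> H A D" using c6 by blast
lemma idr: "f \<in> H A B \<Longrightarrow> f \<cdot> Id A = f" using c7 by blast
lemma idl: "f \<in> H A B \<Longrightarrow> Id B \<cdot> f = f" using c7 by blast
lemma assoc: "f \<in> H A B \<Longrightarrow> g \<in> H B D \<Longrightarrow> h \<in> H D E \<Longrightarrow> h \<cdot> (g \<cdot> f) = (h \<cdot> g) \<cdot> f"
  using c8 by blast
lemma cm_addR: "f \<in> H A B \<Longrightarrow> f' \<in> H A B \<Longrightarrow> g \<in> H B D \<Longrightarrow> g \<cdot> (f + f') = g \<cdot> f + g \<cdot> f'"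
  by (simp add: c9)
lemma cm_smR: "f \<in> H A B \<Longrightarrow> g \<in> H B D \<Longrightarrow> g \<cdot> (c *\<^sub>s f) = c *\<^sub>s (g \<cdot> f)"
  by (simp add: c9)
lemma cm_addL: "f \<in> H A B \<Longrightarrow> g \<in> H B D \<Longrightarrow> g' \<in> H B D \<Longrightarrow> (g + g') \<cdot> f = g \<cdot> f + g' \<cdot> f"
  by (simp add: c10)
lemma cm_smL: "f \<in> H A B \<Longrightarrow> g \<in> H B D \<Longrightarrow> (c *\<^sub>s g) \<cdot> f = c *\<^sub>s (g \<cdot> f)"
  by (simp add: c10)
lemma tm_H: "f \<in> H A B \<Longrightarrow> g \<in> H A' B' \<Longrightarrow> f \<otimes> g \<in> H (A \<odot> A') (B \<odot> B')"
  using c11 by blast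
lemma tm_id: "Id A \<otimes> Id B = Id (A \<odot> B)" using c12 by blast
lemma interchange: "f \<in> H A B \<Longrightarrow> g \<in> H B D \<Longrightarrow> f' \<in> H A' B' \<Longrightarrow> g' \<in> H B' D' \<Longrightarrow>
   (g \<cdot> f) \<otimes> (g' \<cdot> f') = (g \<otimes> g') \<cdot> (f \<otimes> f')"
  using c13 by blast
lemma tm_lin: "f \<in> H A B \<Longrightarrow> f' \<in> H A B \<Longrightarrow> g \<in> H A' B' \<Longrightarrow>
        (f + f') \<otimes> g = f \<otimes> g + f' \<otimes> g \<and>
        g \<otimes> (f + f') = g \<otimes> f + g \<otimes> f' \<and>
        (c *\<^sub>s f) \<otimes> g = c *\<^sub>s (f \<otimes> g) \<and>
        g \<otimes> (c *\<^sub>s f) = c *\<^sub>s (g \<otimes> f)"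
  by (simp add: c14)
lemma to_assoc[simp]: "(A \<odot> B) \<odot> D = A \<odot> (B \<odot> D)" using c15 by blast
lemma to_unit[simp]: "One \<odot> A = A" "A \<odot> One = A" using c16 by blast+
lemma tm_assoc: "f \<in> H A B \<Longrightarrow> g \<in> H A' B' \<Longrightarrow> h \<in> H A'' B'' \<Longrightarrow> (f \<otimes> g) \<otimes> h = f \<otimes> (g \<otimes> h)"
  using c17 by blast
lemma tm_unit: "f \<in> H A B \<Longrightarrow> Id One \<otimes> f = f" "f \<in> H A B \<Longrightarrow> f \<otimes> Id One = f"
  using c18 by blast+
lemma id1_nz: "Id One \<noteq> 0" using c19 by blast
lemma end1: "f \<in> H One One \<Longrightarrow> \<exists>c. f = c *\<^sub>s Id One" using c20 by blast
lemma coev_H: "coev C V \<in> H One (V \<odot> du V)" using c21 by blast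
lemma ev_H: "ev C V \<in> H (du V \<odot> V) One" using c21 by blast
lemma coevt_H: "coevt C V \<in> H One (du V \<odot> V)" using c24 by blast
lemma evt_H: "evt C V \<in> H (V \<odot> du V) One" using c24 by blast
lemma zz1: "(Id V \<otimes> ev C V) \<cdot> (coev C V \<otimes> Id V) = Id V" using c22 by blast
lemma zz2: "(ev C V \<otimes> Id (du V)) \<cdot> (Id (du V) \<otimes> coev C V) = Id (du V)" using c23 by blast
lemma zz3: "(evt C V \<otimes> Id V) \<cdot> (Id V \<otimes> coevt C V) = Id V" using c25 by blast
lemma zz4: "(Id (du V) \<otimes> evt C V) \<cdot> (coevt C V \<otimes> Id (du V)) = Id (du V)" using c26 by blast
lemma du_to[simp]: "du (A \<odot> B) = du B \<odot> du A" using c27 by blast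
lemma ev_to: "ev C (V \<odot> W) = ev C W \<cdot> (Id (du W) \<otimes> (ev C V \<otimes> Id W))" using c28 by blast
lemma coev_to: "coev C (V \<odot> W) = (Id V \<otimes> (coev C W \<otimes> Id (du V))) \<cdot> coev C V" using c29 by blast
lemma evt_to: "evt C (V \<odot> W) = evt C V \<cdot> (Id V \<otimes> (evt C W \<otimes> Id (du V)))" using c30 by blast
lemma coevt_to: "coevt C (V \<odot> W) = (Id (du W) \<otimes> (coevt C V \<otimes> Id W)) \<cdot> coevt C W" using c31 by blast
lemma compat: "f \<in> H V W \<Longrightarrow> dualm C V W f = dualm_r C V W f" using c32 by blast

lemma hId: "A = X \<Longrightarrow> A = Y \<Longrightarrow> Id A \<in> H X Y" using id_H by simp
lemma hcm: "f \<in> H A B \<Longrightarrow> g \<in> H B' D \<Longrightarrow> A = X \<Longrightarrow> B = B' \<Longrightarrow> D = Y \<Longrightarrow> g \<cdot> f \<in> H X Y"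
  using cm_H by blast
lemma htm: "f \<in> H A B \<Longrightarrow> g \<in> H A' B' \<Longrightarrow> A \<odot> A' = X \<Longrightarrow> B \<odot> B' = Y \<Longrightarrow> f \<otimes> g \<in> H X Y"
  using tm_H by blast
lemma hev: "du A \<odot> A = X \<Longrightarrow> One = Y \<Longrightarrow> ev C A \<in> H X Y" using ev_H by blast
lemma hcoev: "One = X \<Longrightarrow> A \<odot> du A = Y \<Longrightarrow> coev C A \<in> H X Y" using coev_H by blast
lemma hevt: "A \<odot> du A = X \<Longrightarrow> One = Y \<Longrightarrow> evt C A \<in> H X Y" using evt_H by blast
lemma hcoevt: "One = X \<Longrightarrow> du A \<odot> A = Y \<Longrightarrow> coevt C A \<in> H X Y" using coevt_H by blast
lemma hsm: "f \<in> H X Y \<Longrightarrow> c *\<^sub>s f \<in> H X Y" by (rule sm_H)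
lemma hadd: "f \<in> H X Y \<Longrightarrow> g \<in> H X Y \<Longrightarrow> f + g \<in> H X Y" by (rule add_H)
lemmas homR = hId hcm htm hev hcoev hevt hcoevt hsm hadd



lemma tmL: "f \<in> H A B \<Longrightarrow> g \<in> H B D \<Longrightarrow> Id X \<otimes> (g \<cdot> f) = (Id X \<otimes> g) \<cdot> (Id X \<otimes> f)"
proof -
  assume a: "f \<in> H A B" "g \<in> H B D"
  have "Id X \<otimes> (g \<cdot> f) = (Id X \<cdot> Id X) \<otimes> (g \<cdot> f)" using idl[OF id_H[of X]] by simp
  also have "\<dots> = (Id X \<otimes> g) \<cdot> (Id X \<otimes> f)" by (rule interchange[OF id_H id_H a])
  finally show ?thesis .
qed

lemma tmR: "f \<in> H A B \<Longrightarrow> g \<in> H B D \<Longrightarrow> (g \<cdot> f) \<otimes> Id X = (g \<otimes> Id X) \<cdot> (f \<otimes> Id X)"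
proof -
  assume a: "f \<in> H A B" "g \<in> H B D"
  have "(g \<cdot> f) \<otimes> Id X = (g \<cdot> f) \<otimes> (Id X \<cdot> Id X)" using idl[OF id_H[of X]] by simp
  also have "\<dots> = (g \<otimes> Id X) \<cdot> (f \<otimes> Id X)" by (rule interchange[OF a id_H id_H])
  finally show ?thesis .
qed

lemma slide1: "f \<in> H A B \<Longrightarrow> g \<in> H A' B' \<Longrightarrow> (f \<otimes> Id B') \<cdot> (Id A \<otimes> g) = f \<otimes> g"
proof -
  assume a: "f \<in> H A B" "g \<in> H A' B'"
  have "(f \<otimes> Id B') \<cdot> (Id A \<otimes> g) = (f \<cdot> Id A) \<otimes> (Id B' \<cdot> g)"
    by (rule interchange[symmetric, OF id_H a(1) a(2) id_H])
  then show ?thesis using a by (simp add: idl idr)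
qed

lemma slide2: "f \<in> H A B \<Longrightarrow> g \<in> H A' B' \<Longrightarrow> (Id B \<otimes> g) \<cdot> (f \<otimes> Id A') = f \<otimes> g"
proof -
  assume a: "f \<in> H A B" "g \<in> H A' B'"
  have "(Id B \<otimes> g) \<cdot> (f \<otimes> Id A') = (Id B \<cdot> f) \<otimes> (g \<cdot> Id A')"
    by (rule interchange[symmetric, OF a(1) id_H id_H a(2)])
  then show ?thesis using a by (simp add: idl idr)
qed

lemma idto: "Id (A \<odot> B) = Id A \<otimes> Id B" by (simp add: tm_id)

lemma hom1X:
  assumes as: "abs_simple C V" and hH: "h \<in> H One (V \<odot> du V)"
  shows "\<exists>c. h = c *\<^sub>s coev C V"
proof -
  let ?g = "(Id V \<otimes> ev C V) \<cdot> (h \<otimes> Id V)"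
  have gH: "?g \<in> H V V" by (rule homR hH refl | simp)+
  obtain c where gc: "?g = c *\<^sub>s Id V" using as gH unfolding abs_simple_def by blast
  have "(?g \<otimes> Id (du V)) \<cdot> coev C V = (((Id V \<otimes> ev C V) \<otimes> Id (du V)) \<cdot> ((h \<otimes> Id V) \<otimes> Id (du V))) \<cdot> coev C V"
    apply (subst tmR) apply (rule homR hH refl | simp)+ done
  also have "\<dots> = (Id V \<otimes> (ev C V \<otimes> Id (du V))) \<cdot> (h \<otimes> Id (V \<odot> du V)) \<cdot> coev C V"
    apply (subst tm_assoc, (rule homR hH refl | simp)+)+
    apply (subst assoc, (rule homR hH refl | simp)+)+
    by (simp add: idto)
  also have "(h \<otimes> Id (V \<odot> du V)) \<cdot> coev C V = h \<otimes> coev C V"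
    using slide1[OF hH coev_H] tm_unit(1)[OF coev_H] by simp
  also have "\<dots> = (Id (V \<odot> du V) \<otimes> coev C V) \<cdot> h"
    using slide2[OF hH coev_H] tm_unit(2)[OF hH] by simp
  also have "(Id V \<otimes> (ev C V \<otimes> Id (du V))) \<cdot> (Id (V \<odot> du V) \<otimes> coev C V) \<cdot> h
     = (Id V \<otimes> ((ev C V \<otimes> Id (du V)) \<cdot> (Id (du V) \<otimes> coev C V))) \<cdot> h"
    apply (subst assoc, (rule homR hH refl | simp)+)+
    apply (simp add: idto)
    apply (subst tm_assoc, (rule homR hH refl | simp)+)+
    apply (subst tmL, (rule homR hH refl | simp)+)+
    done
  also have "\<dots> = h" using hH by (simp add: zz2 idto[symmetric] idl)
  finally have "h = (?g \<otimes> Id (du V)) \<cdot> coev C V" ..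
  also have "\<dots> = c *\<^sub>s coev C V" using gc
    by (simp add: tm_lin[OF id_H id_H id_H] tm_id cm_smL[OF coev_H id_H] idl[OF coev_H])
  finally show ?thesis by blast
qed

lemma homX1:
  assumes as: "abs_simple C V" and hH: "h \<in> H (V \<odot> du V) One"
  shows "\<exists>c. h = c *\<^sub>s evt C V"
proof -
  let ?g = "(h \<otimes> Id V) \<cdot> (Id V \<otimes> coevt C V)"
  have gH: "?g \<in> H V V" by (rule homR hH refl | simp)+
  obtain c where gc: "?g = c *\<^sub>s Id V" using as gH unfolding abs_simple_def by blast
  have "evt C V \<cdot> (?g \<otimes> Id (du V)) = evt C V \<cdot> ((h \<otimes> Id V) \<otimes> Id (du V)) \<cdot> ((Id V \<otimes> coevt C V) \<otimes> Id (du V))"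
    apply (subst tmR) apply (rule homR hH refl | simp)+ done
  also have "\<dots> = (evt C V \<cdot> (h \<otimes> Id (V \<odot> du V))) \<cdot> (Id V \<otimes> (coevt C V \<otimes> Id (du V)))"
    apply (subst tm_assoc, (rule homR hH refl | simp)+)+
    apply (subst assoc, (rule homR hH refl | simp)+)+
    by (simp add: idto)
  also have "evt C V \<cdot> (h \<otimes> Id (V \<odot> du V)) = h \<otimes> evt C V"
    using slide2[OF hH evt_H] tm_unit(1)[OF evt_H] by simp
  also have "\<dots> = h \<cdot> (Id (V \<odot> du V) \<otimes> evt C V)"
    using slide1[OF hH evt_H] tm_unit(2)[OF hH] by simp
  also have "(h \<cdot> (Id (V \<odot> du V) \<otimes> evt C V)) \<cdot> (Id V \<otimes> (coevt C V \<otimes> Id (du V)))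
     = h \<cdot> (Id V \<otimes> ((Id (du V) \<otimes> evt C V) \<cdot> (coevt C V \<otimes> Id (du V))))"
    apply (subst assoc[symmetric], (rule homR hH refl | simp)+)+
    apply (simp add: idto)
    apply (subst tm_assoc, (rule homR hH refl | simp)+)+
    apply (subst tmL, (rule homR hH refl | simp)+)+
    done
  also have "\<dots> = h" using hH by (simp add: zz4 idto[symmetric] idr)
  finally have "h = evt C V \<cdot> (?g \<otimes> Id (du V))" ..
  also have "\<dots> = c *\<^sub>s evt C V" using gc
    by (simp add: tm_lin[OF id_H id_H id_H] tm_id cm_smR[OF id_H evt_H] idr[OF evt_H])
  finally show ?thesis by blast
qed


end


context pc begin

abbreviation dr where "dr A B f \<equiv> dualm_r C A B f"

lemma dr_H: "f \<in> H A B \<Longrightarrow> dr A B f \<in> H (du B) (du A)"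
  unfolding dualm_r_def by (rule homR refl | assumption | simp)+

lemma hdr: "f \<in> H A B \<Longrightarrow> du B = X \<Longrightarrow> du A = Y \<Longrightarrow> dr A B f \<in> H X Y"
  using dr_H by blast

lemma dr_alt: assumes fH: "f \<in> H A B"
  shows "dr A B f = (Id (du A) \<otimes> (evt C B \<cdot> (f \<otimes> Id (du B)))) \<cdot> (coevt C A \<otimes> Id (du B))"
  unfolding dualm_r_def
  apply (subst tmL) apply (rule homR fH refl | simp)+
  apply (subst assoc) apply (rule homR fH refl | simp)+
  done

lemma drP: assumes fH: "f \<in> H A B"
  shows "evt C A \<cdot> (Id A \<otimes> dr A B f) = evt C B \<cdot> (f \<otimes> Id (du B))"
proof -
  let ?k = "evt C B \<cdot> (f \<otimes> Id (du B))"
  have kH: "?k \<in> H (A \<odot> du B) One" by (rule homR fH refl | simp)+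
  have "evt C A \<cdot> (Id A \<otimes> dr A B f) = evt C A \<cdot> (Id A \<otimes> ((Id (du A) \<otimes> ?k) \<cdot> (coevt C A \<otimes> Id (du B))))"
    by (simp add: dr_alt[OF fH])
  also have "\<dots> = (evt C A \<cdot> (Id (A \<odot> du A) \<otimes> ?k)) \<cdot> (Id A \<otimes> coevt C A \<otimes> Id (du B))"
    apply (subst tmL) apply (rule homR kH fH refl | simp)+
    apply (subst assoc) apply (rule homR kH fH refl | simp)+
    apply (subst tm_assoc[where f="Id A" and g="Id (du A)", symmetric]) apply (rule homR kH fH refl | simp)+
    apply (simp add: idto)
    done
  also have "evt C A \<cdot> (Id (A \<odot> du A) \<otimes> ?k) = evt C A \<otimes> ?k"
    using slide1[OF evt_H[of A] kH] tm_unit(2)[OF evt_H[of A]] by simp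
  also have "\<dots> = ?k \<cdot> (evt C A \<otimes> Id (A \<odot> du B))"
    using slide2[OF evt_H[of A] kH] tm_unit(1)[OF kH] by simp
  also have "(?k \<cdot> (evt C A \<otimes> Id (A \<odot> du B))) \<cdot> (Id A \<otimes> coevt C A \<otimes> Id (du B))
     = ?k \<cdot> (((evt C A \<otimes> Id A) \<cdot> (Id A \<otimes> coevt C A)) \<otimes> Id (du B))"
  proof -
    have "?k \<cdot> (((evt C A \<otimes> Id A) \<cdot> (Id A \<otimes> coevt C A)) \<otimes> Id (du B)) = 
       (?k \<cdot> (evt C A \<otimes> Id (A \<odot> du B))) \<cdot> (Id A \<otimes> coevt C A \<otimes> Id (du B))"
      apply (subst tmR) apply (rule homR kH fH refl | simp)+
      apply (subst tm_assoc[where f="evt C A"]) apply (rule homR kH fH refl | simp)+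
      apply (subst tm_assoc[where f="Id A" and g="coevt C A"]) apply (rule homR kH fH refl | simp)+
      apply (simp add: idto)
      apply (subst assoc) apply (rule homR kH fH refl | simp)+
      done
    then show ?thesis ..
  qed
  also have "\<dots> = ?k" using kH by (simp add: zz3 tm_id idr)
  finally show ?thesis .
qed

lemma drU: assumes xH: "x \<in> H (du B) (du A)"
  shows "x = (Id (du A) \<otimes> (evt C A \<cdot> (Id A \<otimes> x))) \<cdot> (coevt C A \<otimes> Id (du B))"
proof -
  have "(Id (du A) \<otimes> (evt C A \<cdot> (Id A \<otimes> x))) \<cdot> (coevt C A \<otimes> Id (du B))
      = (Id (du A) \<otimes> evt C A) \<cdot> ((Id (du A \<odot> A) \<otimes> x) \<cdot> (coevt C A \<otimes> Id (du B)))"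
    apply (subst tmL) apply (rule homR xH refl | simp)+
    apply (subst assoc[symmetric]) apply (rule homR xH refl | simp)+
    apply (subst tm_assoc[where f="Id (du A)" and g="Id A", symmetric]) apply (rule homR xH refl | simp)+
    apply (simp add: idto)
    done
  also have "(Id (du A \<odot> A) \<otimes> x) \<cdot> (coevt C A \<otimes> Id (du B)) = coevt C A \<otimes> x"
    using slide2[OF coevt_H[of A] xH] by simp
  also have "\<dots> = (coevt C A \<otimes> Id (du A)) \<cdot> x"
    using slide1[OF coevt_H[of A] xH] tm_unit(1)[OF xH] by simp
  also have "(Id (du A) \<otimes> evt C A) \<cdot> ((coevt C A \<otimes> Id (du A)) \<cdot> x) = x"
    apply (subst assoc) apply (rule homR xH refl | simp)+
    apply (simp add: zz4 idl[OF xH])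
    done
  finally show ?thesis ..
qed

lemma drUniq: assumes xH: "x \<in> H (du B) (du A)" and yH: "y \<in> H (du B) (du A)"
  and e: "evt C A \<cdot> (Id A \<otimes> x) = evt C A \<cdot> (Id A \<otimes> y)"
  shows "x = y"
  using drU[OF xH] drU[OF yH] e by simp

lemma dr_id: "dr A A (Id A) = Id (du A)"
  apply (rule drUniq[where A=A and B=A])
    apply (rule dr_H, rule id_H)
   apply (rule id_H)
  apply (subst drP[OF id_H])
  apply simp
  done

lemma dr_cm: assumes fH: "f \<in> H A B" and gH: "g \<in> H B D"
  shows "dr A D (g \<cdot> f) = dr A B f \<cdot> dr B D g"
proof (rule drUniq[where A=A and B=D])
  show "dr A D (g \<cdot> f) \<in> H (du D) (du A)" by (rule homR fH gH hdr refl | simp)+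
  show "dr A B f \<cdot> dr B D g \<in> H (du D) (du A)" by (rule homR fH gH hdr refl | simp)+
  have "evt C A \<cdot> (Id A \<otimes> (dr A B f \<cdot> dr B D g)) = (evt C A \<cdot> (Id A \<otimes> dr A B f)) \<cdot> (Id A \<otimes> dr B D g)"
    apply (subst tmL) apply (rule homR fH gH hdr refl | simp)+
    apply (subst assoc) apply (rule homR fH gH hdr refl | simp)+
    done
  also have "\<dots> = evt C B \<cdot> (f \<otimes> Id (du B)) \<cdot> (Id A \<otimes> dr B D g)"
    apply (subst drP) apply (rule homR fH gH hdr refl | simp)+
    apply (subst assoc) apply (rule homR fH gH hdr refl | simp)+
    done
  also have "(f \<otimes> Id (du B)) \<cdot> (Id A \<otimes> dr B D g) = (Id B \<otimes> dr B D g) \<cdot> (f \<otimes> Id (du D))"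
    using slide1[OF fH dr_H[OF gH]] slide2[OF fH dr_H[OF gH]] by simp
  also have "evt C B \<cdot> (Id B \<otimes> dr B D g) \<cdot> (f \<otimes> Id (du D)) = (evt C D \<cdot> (g \<otimes> Id (du D))) \<cdot> (f \<otimes> Id (du D))"
    apply (subst assoc) apply (rule homR fH gH hdr refl | simp)+
    apply (subst drP) apply (rule homR fH gH hdr refl | simp)+
    done
  also have "\<dots> = evt C D \<cdot> ((g \<cdot> f) \<otimes> Id (du D))"
    apply (subst tmR) apply (rule homR fH gH hdr refl | simp)+
    apply (subst assoc) apply (rule homR fH gH hdr refl | simp)+
    done
  also have "\<dots> = evt C A \<cdot> (Id A \<otimes> dr A D (g \<cdot> f))"
    apply (subst drP) apply (rule homR fH gH hdr refl | simp)+
    done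
  finally show "evt C A \<cdot> (Id A \<otimes> dr A D (g \<cdot> f)) = evt C A \<cdot> (Id A \<otimes> (dr A B f \<cdot> dr B D g))" ..
qed

lemma tm_smR: "f \<in> H A B \<Longrightarrow> g \<in> H A' B' \<Longrightarrow> g \<otimes> (c *\<^sub>s f) = c *\<^sub>s (g \<otimes> f)"
  using tm_lin[of f A B f g A' B'] by blast
lemma tm_smL: "f \<in> H A B \<Longrightarrow> g \<in> H A' B' \<Longrightarrow> (c *\<^sub>s f) \<otimes> g = c *\<^sub>s (f \<otimes> g)"
  using tm_lin[of f A B f g A' B'] by blast
lemma tm_addR: "f \<in> H A B \<Longrightarrow> f' \<in> H A B \<Longrightarrow> g \<in> H A' B' \<Longrightarrow> g \<otimes> (f + f') = g \<otimes> f + g \<otimes> f'"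
  using tm_lin[of f A B f' g A' B'] by blast
lemma tm_addL: "f \<in> H A B \<Longrightarrow> f' \<in> H A B \<Longrightarrow> g \<in> H A' B' \<Longrightarrow> (f + f') \<otimes> g = f \<otimes> g + f' \<otimes> g"
  using tm_lin[of f A B f' g A' B'] by blast

lemma dr_sm: assumes fH: "f \<in> H A B" shows "dr A B (c *\<^sub>s f) = c *\<^sub>s dr A B f"
proof (rule drUniq[where A=A and B=B])
  show "dr A B (c *\<^sub>s f) \<in> H (du B) (du A)" by (rule homR fH hdr refl | simp)+
  show "c *\<^sub>s dr A B f \<in> H (du B) (du A)" by (rule homR fH hdr refl | simp)+
  have "evt C A \<cdot> (Id A \<otimes> dr A B (c *\<^sub>s f)) = evt C B \<cdot> ((c *\<^sub>s f) \<otimes> Id (du B))"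
    by (rule drP, rule sm_H, rule fH)
  also have "\<dots> = c *\<^sub>s (evt C A \<cdot> (Id A \<otimes> dr A B f))"
    by (simp add: drP[OF fH] tm_smL[OF fH id_H] cm_smR[OF tm_H[OF fH id_H] evt_H])
  also have "\<dots> = evt C A \<cdot> (Id A \<otimes> (c *\<^sub>s dr A B f))"
    by (simp add: tm_smR[OF dr_H[OF fH] id_H] cm_smR[OF tm_H[OF id_H dr_H[OF fH]] evt_H])
  finally show "evt C A \<cdot> (Id A \<otimes> dr A B (c *\<^sub>s f)) = evt C A \<cdot> (Id A \<otimes> (c *\<^sub>s dr A B f))" .
qed

lemma dr_add: assumes fH: "f \<in> H A B" and gH: "g \<in> H A B" shows "dr A B (f + g) = dr A B f + dr A B g"
proof (rule drUniq[where A=A and B=B])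
  show "dr A B (f + g) \<in> H (du B) (du A)" by (rule homR fH gH hdr refl | simp)+
  show "dr A B f + dr A B g \<in> H (du B) (du A)" by (rule homR fH gH hdr refl | simp)+
  have "evt C A \<cdot> (Id A \<otimes> dr A B (f + g)) = evt C B \<cdot> ((f + g) \<otimes> Id (du B))"
    by (rule drP, rule add_H, rule fH, rule gH)
  also have "\<dots> = evt C A \<cdot> (Id A \<otimes> dr A B f) + evt C A \<cdot> (Id A \<otimes> dr A B g)"
    by (simp add: drP[OF fH] drP[OF gH] tm_addL[OF fH gH id_H] cm_addR[OF tm_H[OF fH id_H] tm_H[OF gH id_H] evt_H])
  also have "\<dots> = evt C A \<cdot> (Id A \<otimes> (dr A B f + dr A B g))"
    by (simp add: tm_addR[OF dr_H[OF fH] dr_H[OF gH] id_H] cm_addR[OF tm_H[OF id_H dr_H[OF fH]] tm_H[OF id_H dr_H[OF gH]] evt_H])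
  finally show "evt C A \<cdot> (Id A \<otimes> dr A B (f + g)) = evt C A \<cdot> (Id A \<otimes> (dr A B f + dr A B g))" .
qed

lemma drV: assumes fH: "f \<in> H A B"
  shows "f = ((evt C B \<cdot> (f \<otimes> Id (du B))) \<otimes> Id B) \<cdot> (Id A \<otimes> coevt C B)"
proof -
  have "((evt C B \<cdot> (f \<otimes> Id (du B))) \<otimes> Id B) \<cdot> (Id A \<otimes> coevt C B)
    = (evt C B \<otimes> Id B) \<cdot> ((f \<otimes> Id (du B \<odot> B)) \<cdot> (Id A \<otimes> coevt C B))"
    apply (subst tmR) apply (rule homR fH refl | simp)+
    apply (subst assoc[symmetric]) apply (rule homR fH refl | simp)+
    apply (subst tm_assoc[where f=f]) apply (rule homR fH refl | simp)+
    apply (simp add: idto)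
    done
  also have "(f \<otimes> Id (du B \<odot> B)) \<cdot> (Id A \<otimes> coevt C B) = f \<otimes> coevt C B"
    using slide1[OF fH coevt_H[of B]] by simp
  also have "\<dots> = (Id B \<otimes> coevt C B) \<cdot> f"
    using slide2[OF fH coevt_H[of B]] tm_unit(2)[OF fH] by simp
  also have "(evt C B \<otimes> Id B) \<cdot> ((Id B \<otimes> coevt C B) \<cdot> f) = f"
    apply (subst assoc) apply (rule homR fH refl | simp)+
    apply (simp add: zz3 idl[OF fH])
    done
  finally show ?thesis ..
qed

lemma drInj: assumes fH: "f \<in> H A B" and gH: "g \<in> H A B" and e: "dr A B f = dr A B g"
  shows "f = g"
proof -
  have "evt C B \<cdot> (f \<otimes> Id (du B)) = evt C B \<cdot> (g \<otimes> Id (du B))"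
    using drP[OF fH] drP[OF gH] e by simp
  then show ?thesis using drV[OF fH] drV[OF gH] by simp
qed

lemma drS: assumes xH: "x \<in> H (du B) (du A)"
  shows "\<exists>f \<in> H A B. dr A B f = x"
proof -
  define k where "k = evt C A \<cdot> (Id A \<otimes> x)"
  have kH: "k \<in> H (A \<odot> du B) One" unfolding k_def by (rule homR xH refl | simp)+
  let ?f = "(k \<otimes> Id B) \<cdot> (Id A \<otimes> coevt C B)"
  have fH: "?f \<in> H A B" by (rule homR kH refl | simp)+
  have "evt C B \<cdot> (?f \<otimes> Id (du B)) = (evt C B \<cdot> (k \<otimes> Id (B \<odot> du B))) \<cdot> (Id A \<otimes> coevt C B \<otimes> Id (du B))"
    apply (subst tmR) apply (rule homR kH refl | simp)+
    apply (subst assoc) apply (rule homR kH refl | simp)+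
    apply (subst tm_assoc[where f="k"]) apply (rule homR kH refl | simp)+
    apply (subst tm_assoc[where f="Id A" and g="coevt C B"]) apply (rule homR kH refl | simp)+
    apply (simp add: idto)
    done
  also have "evt C B \<cdot> (k \<otimes> Id (B \<odot> du B)) = k \<otimes> evt C B"
    using slide2[OF kH evt_H[of B]] tm_unit(1)[OF evt_H[of B]] by simp
  also have "\<dots> = k \<cdot> (Id (A \<odot> du B) \<otimes> evt C B)"
    using slide1[OF kH evt_H[of B]] tm_unit(2)[OF kH] by simp
  also have "(k \<cdot> (Id (A \<odot> du B) \<otimes> evt C B)) \<cdot> (Id A \<otimes> coevt C B \<otimes> Id (du B))
      = k \<cdot> (Id A \<otimes> ((Id (du B) \<otimes> evt C B) \<cdot> (coevt C B \<otimes> Id (du B))))"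
    apply (subst assoc[symmetric]) apply (rule homR kH refl | simp)+
    apply (simp add: idto)
    apply (subst tm_assoc[where f="Id A" and g="Id (du B)"]) apply (rule homR kH refl | simp)+
    apply (subst tmL) apply (rule homR kH refl | simp)+
    done
  also have "\<dots> = k" using kH by (simp add: zz4 idto[symmetric] idr)
  finally have e: "evt C B \<cdot> (?f \<otimes> Id (du B)) = k" .
  have "dr A B ?f = x"
    apply (rule drUniq[where A=A and B=B])
      apply (rule dr_H[OF fH])
     apply (rule xH)
    unfolding k_def[symmetric] using e by (simp add: drP[OF fH])
  then show ?thesis using fH by blast
qed

lemma du1sq[simp]: "du One \<odot> du One = du One" "du One \<odot> du One \<odot> X = du One \<odot> X"
proof -
  show "du One \<odot> du One = du One" using du_to[of One One] by simp
  then show "du One \<odot> du One \<odot> X = du One \<odot> X" by (metis to_assoc)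
qed

lemma coev1H: "coev C One \<in> H One (du One)" using coev_H[of One] by simp
lemma evt1H: "evt C One \<in> H (du One) One" using evt_H[of One] by simp
lemma ev1H: "ev C One \<in> H (du One) One" using ev_H[of One] by simp
lemma coevt1H: "coevt C One \<in> H One (du One)" using coevt_H[of One] by simp

lemma ev1: "ev C One \<cdot> coev C One = Id One"
proof -
  have "(Id One \<otimes> ev C One) \<cdot> (coev C One \<otimes> Id One) = Id One" by (rule zz1)
  then show ?thesis using tm_unit(1)[OF ev_H[of One]] tm_unit(2)[OF coev_H[of One]] by simp
qed

lemma evt1: "evt C One \<cdot> coevt C One = Id One"
proof -
  have "(evt C One \<otimes> Id One) \<cdot> (Id One \<otimes> coevt C One) = Id One" by (rule zz3)
  then show ?thesis using tm_unit(2)[OF evt_H[of One]] tm_unit(1)[OF coevt_H[of One]] by simp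
qed

lemma coev1ev1: "coev C One \<cdot> ev C One = Id (du One)"
proof -
  have "(ev C One \<otimes> Id (du One)) \<cdot> (Id (du One) \<otimes> coev C One) = Id (du One)" by (rule zz2)
  moreover have "(ev C One \<otimes> Id (du One)) \<cdot> (Id (du One) \<otimes> coev C One) = ev C One \<otimes> coev C One"
    using slide1[OF ev_H[of One] coev_H[of One]] by simp
  moreover have "(Id One \<otimes> coev C One) \<cdot> (ev C One \<otimes> Id One) = ev C One \<otimes> coev C One"
    using slide2[OF ev_H[of One] coev_H[of One]] by simp
  ultimately show ?thesis using tm_unit(2)[OF ev_H[of One]] tm_unit(1)[OF coev_H[of One]] by simp
qed

lemma coev1_sq: "coev C One = (coev C One \<otimes> Id (du One)) \<cdot> coev C One"
  using coev_to[of One One] tm_unit(1)[OF tm_H[OF coev_H[of One] id_H[of "du One"]]] by simp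

lemma evt1_sq: "evt C One = evt C One \<cdot> (evt C One \<otimes> Id (du One))"
  using evt_to[of One One] tm_unit(1)[OF tm_H[OF evt_H[of One] id_H[of "du One"]]] by simp

lemma smul_cancel: assumes "c *\<^sub>s x = d *\<^sub>s x" "x \<noteq> 0" shows "c = d"
proof (rule ccontr)
  assume "c \<noteq> d"
  have "(c - d) *\<^sub>s x = 0" using assms(1) module.scale_left_diff_distrib[OF mod] by simp
  then have "inverse (c - d) *\<^sub>s ((c - d) *\<^sub>s x) = 0" using module.scale_zero_right[OF mod] by simp
  then have "x = 0" using \<open>c \<noteq> d\<close> module.scale_scale[OF mod] module.scale_one[OF mod] by simp
  then show False using assms(2) by simp
qed

lemma unit_lambda: "evt C One \<cdot> coev C One = Id One"
proof -
  have hH: "evt C One \<cdot> coev C One \<in> H One One" by (rule homR  refl | simp)+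
  obtain l where l: "evt C One \<cdot> coev C One = l *\<^sub>s Id One" using end1[OF hH] by blast
  have "evt C One \<cdot> coev C One = evt C One \<cdot> (evt C One \<otimes> Id (du One)) \<cdot> (coev C One \<otimes> Id (du One)) \<cdot> coev C One"
  proof -
    have "evt C One \<cdot> (evt C One \<otimes> Id (du One)) \<cdot> (coev C One \<otimes> Id (du One)) \<cdot> coev C One = evt C One \<cdot> coev C One"
      apply (subst coev1_sq[symmetric])
      apply (subst assoc) apply (rule homR  refl | simp)+
      apply (subst evt1_sq[symmetric])
      apply (rule refl)
      done
    then show ?thesis ..
  qed
  also have "\<dots> = evt C One \<cdot> ((evt C One \<cdot> coev C One) \<otimes> Id (du One)) \<cdot> coev C One"
    apply (subst (2) assoc) apply (rule homR  refl | simp)+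
    apply (subst tmR[symmetric]) apply (rule homR  refl | simp)+
    done
  also have "\<dots> = l *\<^sub>s (evt C One \<cdot> coev C One)"
  proof -
    have h1: "(l *\<^sub>s Id One) \<otimes> Id (du One) = l *\<^sub>s Id (du One)"
      using tm_smL[OF id_H id_H] tm_id by simp
    have h2: "(l *\<^sub>s Id (du One)) \<cdot> coev C One = l *\<^sub>s coev C One"
      using cm_smL[OF coev1H id_H] idl[OF coev1H] by simp
    have h3: "evt C One \<cdot> (l *\<^sub>s coev C One) = l *\<^sub>s (evt C One \<cdot> coev C One)"
      using cm_smR[OF coev1H evt1H] by simp
    show ?thesis by (simp only: l h1 h2 h3)
  qed
  also have "\<dots> = (l * l) *\<^sub>s Id One" unfolding l using module.scale_scale[OF mod] by simp
  finally have "l *\<^sub>s Id One = (l * l) *\<^sub>s Id One" using l by simp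
  then have ll: "l = l * l" using smul_cancel id1_nz by blast
  have "l \<noteq> 0"
  proof
    assume "l = 0"
    then have z: "evt C One \<cdot> coev C One = 0" using l module.scale_zero_left[OF mod] by simp
    have "evt C One = evt C One \<cdot> coev C One \<cdot> ev C One" using coev1ev1 idr[OF evt_H[of One]] by simp
    also have "\<dots> = 0"
      apply (subst assoc) apply (rule homR  refl | simp)+
      apply (simp add: z)
      using cm_smL[OF ev_H[of One] zero_H, of 0] module.scale_zero_left[OF mod] by simp
    finally have "Id One = 0" using evt1 cm_smL[OF coevt_H[of One] zero_H, of 0] module.scale_zero_left[OF mod] by simp
    then show False using id1_nz by simp
  qed
  then have "l = 1" using ll by (metis mult_cancel_left1)
  then show ?thesis using l module.scale_one[OF mod] by simp
qed

definition Tp where "Tp V = (evt C V \<otimes> Id (du (du V) \<odot> du V)) \<cdot> (Id V \<otimes> (coev C (du V) \<otimes> Id (du V))) \<cdot> coev C V"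

lemma Tp_H: "Tp V \<in> H One (du (du V) \<odot> du V)" unfolding Tp_def by (rule homR  refl | simp)+

lemma Lc: "(Id (du (du V) \<odot> du V) \<otimes> evt C V) \<cdot> coevt C (V \<odot> du V) = coevt C (du V)"
proof -
  have "(Id (du (du V) \<odot> du V) \<otimes> evt C V) \<cdot> coevt C (V \<odot> du V)
     = (Id (du (du V)) \<otimes> ((Id (du V) \<otimes> evt C V) \<cdot> (coevt C V \<otimes> Id (du V)))) \<cdot> coevt C (du V)"
    apply (subst coevt_to)
    apply (simp add: idto)
    apply (subst tm_assoc[where f="Id (du (du V))"]) apply (rule homR  refl | simp)+
    apply (subst tmL) apply (rule homR  refl | simp)+
    apply (subst assoc) apply (rule homR  refl | simp)+
    done
  also have "\<dots> = coevt C (du V)" by (simp add: zz4 idto[symmetric] idl[OF coevt_H])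
  finally show ?thesis .
qed

lemma drEvt: "dr (V \<odot> du V) One (evt C V) = coevt C (du V) \<otimes> evt C One"
proof -
  have "dr (V \<odot> du V) One (evt C V) = (Id (du (du V) \<odot> du V) \<otimes> evt C One) \<cdot>
     (((Id (du (du V) \<odot> du V) \<otimes> evt C V) \<cdot> coevt C (V \<odot> du V)) \<otimes> Id (du One))"
    unfolding dualm_r_def
    apply simp
    apply (subst tm_assoc[where f="Id (du (du V) \<odot> du V)", symmetric]) apply (rule homR  refl | simp)+
    apply (subst tmR[where X="du One"]) apply (rule homR  refl | simp)+
    done
  also have "\<dots> = coevt C (du V) \<otimes> evt C One"
    unfolding Lc using slide2[OF coevt_H[of "du V"] evt1H] by simp
  finally show ?thesis .
qed

lemma dmEvt: "dualm C (V \<odot> du V) One (evt C V) = ev C One \<otimes> Tp V"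
proof -
  have "dualm C (V \<odot> du V) One (evt C V) = (ev C One \<otimes> Id (du (du V) \<odot> du V)) \<cdot> (Id (du One) \<otimes> Tp V)"
    unfolding dualm_def Tp_def
    apply (subst coev_to)
    apply simp
    apply (subst tmL[where X="du One", symmetric]) apply (rule homR  refl | simp)+
    done
  also have "\<dots> = ev C One \<otimes> Tp V" using slide1[OF ev1H Tp_H] by simp
  finally show ?thesis .
qed

lemma Tp_eq: "Tp V = coevt C (du V)"
proof -
  have e: "ev C One \<otimes> Tp V = coevt C (du V) \<otimes> evt C One"
    using compat[OF evt_H[of V]] dmEvt drEvt by simp
  have "(ev C One \<otimes> Tp V) \<cdot> coev C One = (ev C One \<cdot> coev C One) \<otimes> (Tp V \<cdot> Id One)"
    using interchange[OF coev1H ev1H id_H Tp_H] tm_unit(2)[OF coev1H] by simp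
  also have "\<dots> = Tp V" using ev1 idr[OF Tp_H] tm_unit(1)[OF Tp_H] by simp
  finally have 1: "(ev C One \<otimes> Tp V) \<cdot> coev C One = Tp V" .
  have "(coevt C (du V) \<otimes> evt C One) \<cdot> coev C One = (coevt C (du V) \<cdot> Id One) \<otimes> (evt C One \<cdot> coev C One)"
    using interchange[OF id_H coevt_H coev1H evt1H] tm_unit(1)[OF coev1H] by simp
  also have "\<dots> = coevt C (du V)" using unit_lambda idr[OF coevt_H] tm_unit(2)[OF coevt_H] by simp
  finally have 2: "(coevt C (du V) \<otimes> evt C One) \<cdot> coev C One = coevt C (du V)" .
  show ?thesis using 1 2 e by simp
qed

lemma pair_inv:
  assumes e1: "e1 \<in> H (P \<odot> Q) One" and c1: "c1 \<in> H One (Q \<odot> P)"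
    and e2: "e2 \<in> H (R \<odot> Q) One" and c2: "c2 \<in> H One (Q \<odot> R)"
    and z1: "(e1 \<otimes> Id P) \<cdot> (Id P \<otimes> c1) = Id P"
    and z2: "(Id Q \<otimes> e2) \<cdot> (c2 \<otimes> Id Q) = Id Q"
  shows "((e2 \<otimes> Id P) \<cdot> (Id R \<otimes> c1)) \<cdot> ((e1 \<otimes> Id R) \<cdot> (Id P \<otimes> c2)) = Id P"
proof -
  have gH: "Id R \<otimes> c1 \<in> H R (R \<odot> Q \<odot> P)" by (rule homR c1 refl | simp)+
  have g'H: "e2 \<otimes> Id P \<in> H (R \<odot> Q \<odot> P) P" by (rule homR e2 refl | simp)+
  have s1: "(Id R \<otimes> c1) \<cdot> (e1 \<otimes> Id R) = (e1 \<otimes> Id (R \<odot> Q \<odot> P)) \<cdot> (Id (P \<odot> Q) \<otimes> (Id R \<otimes> c1))"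
    using slide2[OF e1 gH] slide1[OF e1 gH] tm_unit(1)[OF gH] by simp
  have s2: "(e2 \<otimes> Id P) \<cdot> (e1 \<otimes> Id (R \<odot> Q \<odot> P)) = (e1 \<otimes> Id P) \<cdot> (Id (P \<odot> Q) \<otimes> (e2 \<otimes> Id P))"
    using slide2[OF e1 g'H] slide1[OF e1 g'H] tm_unit(1)[OF g'H] by simp
  have s3a: "(Id (Q \<odot> R) \<otimes> c1) \<cdot> c2 = (c2 \<otimes> Id (Q \<odot> P)) \<cdot> c1"
    using slide2[OF c2 c1] slide1[OF c2 c1] tm_unit(2)[OF c2] tm_unit(1)[OF c1] by simp
  have s3: "(Id (P \<odot> Q) \<otimes> (Id R \<otimes> c1)) \<cdot> (Id P \<otimes> c2) = (Id P \<otimes> (c2 \<otimes> Id (Q \<odot> P))) \<cdot> (Id P \<otimes> c1)"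
  proof -
    have "Id (P \<odot> Q) \<otimes> (Id R \<otimes> c1) = Id P \<otimes> (Id (Q \<odot> R) \<otimes> c1)"
      apply (simp add: idto)
      apply (subst tm_assoc[where f="Id P"]) apply (rule homR c1 refl | simp)+
      apply (subst tm_assoc[where f="Id Q" and g="Id R", symmetric]) apply (rule homR c1 refl | simp)+
      done
    then show ?thesis
      apply simp
      apply (subst tmL[symmetric]) apply (rule homR c1 c2 refl | simp)+
      apply (subst tmL[symmetric]) apply (rule homR c1 c2 refl | simp)+
      apply (simp add: s3a)
      done
  qed
  have s4: "(Id (P \<odot> Q) \<otimes> (e2 \<otimes> Id P)) \<cdot> (Id P \<otimes> (c2 \<otimes> Id (Q \<odot> P))) = Id (P \<odot> Q \<odot> P)"
  proof -
    have "Id (P \<odot> Q) \<otimes> (e2 \<otimes> Id P) = Id P \<otimes> ((Id Q \<otimes> e2) \<otimes> Id P)"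
      apply (simp add: idto)
      apply (subst tm_assoc[where f="Id P"]) apply (rule homR e2 refl | simp)+
      apply (subst tm_assoc[where f="Id Q", symmetric]) apply (rule homR e2 refl | simp)+
      done
    moreover have "c2 \<otimes> Id (Q \<odot> P) = (c2 \<otimes> Id Q) \<otimes> Id P"
      apply (simp add: idto)
      apply (subst tm_assoc[where f=c2]) apply (rule homR c2 refl | simp)+
      done
    ultimately show ?thesis
      apply simp
      apply (subst tmL[symmetric]) apply (rule homR c2 e2 refl | simp)+
      apply (subst tmR[symmetric]) apply (rule homR c2 e2 refl | simp)+
      apply (simp add: z2 tm_id)
      done
  qed
  have "((e2 \<otimes> Id P) \<cdot> (Id R \<otimes> c1)) \<cdot> ((e1 \<otimes> Id R) \<cdot> (Id P \<otimes> c2))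
      = (e2 \<otimes> Id P) \<cdot> ((Id R \<otimes> c1) \<cdot> (e1 \<otimes> Id R)) \<cdot> (Id P \<otimes> c2)"
    apply (subst assoc) apply (rule homR c1 c2 e1 e2 refl | simp)+
    apply (subst assoc) apply (rule homR c1 c2 e1 e2 refl | simp)+
    apply (subst assoc) apply (rule homR c1 c2 e1 e2 refl | simp)+
    done
  also have "\<dots> = ((e2 \<otimes> Id P) \<cdot> (e1 \<otimes> Id (R \<odot> Q \<odot> P))) \<cdot> (Id (P \<odot> Q) \<otimes> (Id R \<otimes> c1)) \<cdot> (Id P \<otimes> c2)"
    unfolding s1
    apply ((subst assoc[symmetric], (rule homR c1 c2 e1 e2 refl | simp)+)+)?
    done
  also have "\<dots> = (e1 \<otimes> Id P) \<cdot> ((Id (P \<odot> Q) \<otimes> (e2 \<otimes> Id P)) \<cdot> (Id P \<otimes> (c2 \<otimes> Id (Q \<odot> P)))) \<cdot> (Id P \<otimes> c1)"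
    unfolding s2 s3
    apply ((subst assoc[symmetric], (rule homR c1 c2 e1 e2 refl | simp)+)+)?
    done
  also have "\<dots> = Id P"
    unfolding s4 using z1 idl[OF tm_H[OF id_H c1]] by simp
  finally show ?thesis .
qed

definition phi' where "phi' V = (ev C (du V) \<otimes> Id V) \<cdot> (Id (du (du V)) \<otimes> coevt C V)"

lemma phi_H: "phi C V \<in> H V (du (du V))" unfolding phi_def by (rule homR  refl | simp)+
lemma phi'_H: "phi' V \<in> H (du (du V)) V" unfolding phi'_def by (rule homR  refl | simp)+

lemma phi'_phi: "phi' V \<cdot> phi C V = Id V"
  unfolding phi_def phi'_def
  by (rule pair_inv[OF evt_H coevt_H ev_H coev_H zz3 zz1])

lemma phi_phi': "phi C V \<cdot> phi' V = Id (du (du V))"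
  unfolding phi_def phi'_def
  by (rule pair_inv[OF ev_H coev_H evt_H coevt_H zz2 zz4])

lemma inv_phi: "inv_mor C V (du (du V)) (phi C V) = phi' V"
  unfolding inv_mor_def
proof (rule the_equality)
  show "phi' V \<in> H (du (du V)) V \<and> phi' V \<cdot> phi C V = Id V \<and> phi C V \<cdot> phi' V = Id (du (du V))"
    using phi'_H phi'_phi phi_phi' by blast
  fix g assume g: "g \<in> H (du (du V)) V \<and> g \<cdot> phi C V = Id V \<and> phi C V \<cdot> g = Id (du (du V))"
  have "g = g \<cdot> (phi C V \<cdot> phi' V)" using phi_phi' idr[of g "du (du V)" V] g by simp
  also have "\<dots> = (g \<cdot> phi C V) \<cdot> phi' V" using assoc[OF phi'_H phi_H] g by blast
  also have "\<dots> = phi' V" using g idl[OF phi'_H] by simp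
  finally show "g = phi' V" .
qed

lemma Tp_phi: "Tp V = (phi C V \<otimes> Id (du V)) \<cdot> coev C V"
  unfolding Tp_def phi_def
  apply (subst tmR) apply (rule homR  refl | simp)+
  apply (subst tm_assoc[where f="evt C V"]) apply (rule homR  refl | simp)+
  apply (subst tm_assoc[where f="Id V"]) apply (rule homR  refl | simp)+
  apply (simp add: idto)
  apply ((subst assoc[symmetric], (rule homR  refl | simp)+)+)?
  done

lemma psi_coevt: "(phi' V \<otimes> Id (du V)) \<cdot> coevt C (du V) = coev C V"
proof -
  have "(phi' V \<otimes> Id (du V)) \<cdot> coevt C (du V) = (phi' V \<otimes> Id (du V)) \<cdot> (phi C V \<otimes> Id (du V)) \<cdot> coev C V"
    using Tp_eq Tp_phi by simp
  also have "\<dots> = coev C V"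
    apply (subst assoc[OF coev_H tm_H[OF phi_H id_H] tm_H[OF phi'_H id_H]])
    apply (subst tmR[OF phi_H phi'_H, symmetric])
    apply (simp add: phi'_phi tm_id idl[OF coev_H])
    done
  finally show ?thesis .
qed

lemma drEvt_coev: "dr (V \<odot> du V) One (evt C V) \<cdot> coev C One = coevt C (du V)"
proof -
  have "(coevt C (du V) \<otimes> evt C One) \<cdot> coev C One = (coevt C (du V) \<cdot> Id One) \<otimes> (evt C One \<cdot> coev C One)"
    using interchange[OF id_H coevt_H coev1H evt1H] tm_unit(1)[OF coev1H] by simp
  also have "\<dots> = coevt C (du V)" using unit_lambda idr[OF coevt_H] tm_unit(2)[OF coevt_H] by simp
  finally show ?thesis using drEvt by simp
qed

lemma dr_coevt: assumes fH: "f \<in> H (V \<odot> du V) (V \<odot> du V)" and e: "evt C V \<cdot> f = c *\<^sub>s evt C V"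
  shows "dr (V \<odot> du V) (V \<odot> du V) f \<cdot> coevt C (du V) = c *\<^sub>s coevt C (du V)"
proof -
  have "dr (V \<odot> du V) (V \<odot> du V) f \<cdot> coevt C (du V)
     = (dr (V \<odot> du V) (V \<odot> du V) f \<cdot> dr (V \<odot> du V) One (evt C V)) \<cdot> coev C One"
    unfolding drEvt_coev[symmetric]
    apply (rule assoc) apply (rule homR hdr fH refl | simp)+ done
  also have "\<dots> = dr (V \<odot> du V) One (c *\<^sub>s evt C V) \<cdot> coev C One"
    using dr_cm[OF fH evt_H] e by simp
  also have "\<dots> = c *\<^sub>s coevt C (du V)"
    using dr_sm[OF evt_H] cm_smL[OF coev1H dr_H[OF evt_H]] drEvt_coev by simp
  finally show ?thesis .
qed

lemma RA_rhs: assumes fH: "f \<in> H (V \<odot> du V) (V \<odot> du V)" and e: "evt C V \<cdot> f = c *\<^sub>s evt C V"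
  shows "(inv_mor C V (du (du V)) (phi C V) \<otimes> Id (du V)) \<cdot> (dualm C (V \<odot> du V) (V \<odot> du V) f \<cdot> coevt C (du V))
     = c *\<^sub>s coev C V"
  unfolding inv_phi compat[OF fH] dr_coevt[OF fH e]
  using cm_smR[OF coevt_H tm_H[OF phi'_H id_H]] psi_coevt by simp

lemma cm_zeroR: assumes g: "g \<in> H B D" shows "g \<cdot> 0 = 0"
proof -
  have "g \<cdot> (0 + 0) = g \<cdot> 0 + g \<cdot> 0" by (rule cm_addR[OF zero_H zero_H g])
  then show ?thesis by simp
qed
lemma cm_zeroL: assumes f: "f \<in> H A B" shows "0 \<cdot> f = 0"
proof -
  have "(0 + 0) \<cdot> f = 0 \<cdot> f + 0 \<cdot> f" by (rule cm_addL[OF f zero_H zero_H])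
  then show ?thesis by simp
qed
lemma tm_zeroL: assumes g: "g \<in> H A' B'" shows "0 \<otimes> g = 0"
proof -
  have "(0 + 0) \<otimes> g = 0 \<otimes> g + 0 \<otimes> g" by (rule tm_addL[OF zero_H zero_H g])
  then show ?thesis by simp
qed
lemma sm_zero[simp]: "c *\<^sub>s 0 = 0" using module.scale_zero_right[OF mod] by simp
lemma sm_zero_left[simp]: "0 *\<^sub>s x = 0" using module.scale_zero_left[OF mod] by simp
lemma sm_one[simp]: "1 *\<^sub>s x = x" using module.scale_one[OF mod] by simp
lemma sm_sm[simp]: "a *\<^sub>s (b *\<^sub>s x) = (a * b) *\<^sub>s x" using module.scale_scale[OF mod] by simp
lemma sm_ldiff: "(a - b) *\<^sub>s x = a *\<^sub>s x - b *\<^sub>s x" using module.scale_left_diff_distrib[OF mod] by simp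
lemma sm_neg: "(- a) *\<^sub>s x = - (a *\<^sub>s x)" using module.scale_minus_left[OF mod] by simp

lemma pow_H: "r \<in> H W W \<Longrightarrow> (cmp C r ^^ n) (Id W) \<in> H W W"
  by (induction n) (auto intro: id_H cm_H)

lemma pow_comm: "r \<in> H W W \<Longrightarrow> (cmp C r ^^ n) (Id W) \<cdot> r = r \<cdot> (cmp C r ^^ n) (Id W)"
proof (induction n)
  case 0 then show ?case by (simp add: idl idr)
next
  case (Suc n)
  have "(cmp C r ^^ Suc n) (Id W) \<cdot> r = r \<cdot> ((cmp C r ^^ n) (Id W) \<cdot> r)"
    using assoc[OF Suc.prems pow_H[OF Suc.prems] Suc.prems] by simp
  then show ?case using Suc by simp
qed

lemma eigR: assumes rH: "r \<in> H W W" and nil: "nilpotent_mor C W r" and uH: "u \<in> H Y W"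
  and unz: "u \<noteq> 0" and ru: "r \<cdot> u = a *\<^sub>s u" shows "a = 0"
proof -
  have P: "(cmp C r ^^ n) (Id W) \<cdot> u = (a ^ n) *\<^sub>s u" for n
  proof (induction n)
    case 0 then show ?case using idl[OF uH] by simp
  next
    case (Suc n)
    have "(cmp C r ^^ Suc n) (Id W) \<cdot> u = r \<cdot> ((cmp C r ^^ n) (Id W) \<cdot> u)"
      using assoc[OF uH pow_H[OF rH] rH] by simp
    also have "\<dots> = (a ^ n) *\<^sub>s (r \<cdot> u)" using Suc cm_smR[OF uH rH] by simp
    also have "\<dots> = (a ^ Suc n) *\<^sub>s u" using ru by (simp add: mult.commute)
    finally show ?case .
  qed
  obtain n where "(cmp C r ^^ n) (Id W) = 0" using nil unfolding nilpotent_mor_def by blast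
  then have "(a ^ n) *\<^sub>s u = 0 *\<^sub>s u" using P[of n] cm_zeroL[OF uH] by simp
  then have "a ^ n = 0" using smul_cancel unz by blast
  then show ?thesis by simp
qed

lemma eigL: assumes rH: "r \<in> H W W" and nil: "nilpotent_mor C W r" and wH: "w \<in> H W Y"
  and wnz: "w \<noteq> 0" and wr: "w \<cdot> r = a *\<^sub>s w" shows "a = 0"
proof -
  have P: "w \<cdot> (cmp C r ^^ n) (Id W) = (a ^ n) *\<^sub>s w" for n
  proof (induction n)
    case 0 then show ?case using idr[OF wH] by simp
  next
    case (Suc n)
    have "w \<cdot> (cmp C r ^^ Suc n) (Id W) = (w \<cdot> r) \<cdot> (cmp C r ^^ n) (Id W)"
      using assoc[OF pow_H[OF rH] rH wH] by simp
    also have "\<dots> = a *\<^sub>s (w \<cdot> (cmp C r ^^ n) (Id W))" using wr cm_smL[OF pow_H[OF rH] wH] by simp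
    also have "\<dots> = (a ^ Suc n) *\<^sub>s w" using Suc by simp
    finally show ?case .
  qed
  obtain n where "(cmp C r ^^ n) (Id W) = 0" using nil unfolding nilpotent_mor_def by blast
  then have "(a ^ n) *\<^sub>s w = 0 *\<^sub>s w" using P[of n] cm_zeroR[OF wH] by simp
  then have "a ^ n = 0" using smul_cancel wnz by blast
  then show ?thesis by simp
qed

lemma eig_g: assumes rH: "r \<in> H W W" and nil: "nilpotent_mor C W r" and uH: "u \<in> H Y W"
  and unz: "u \<noteq> 0" and gu: "(\<mu> *\<^sub>s Id W + r) \<cdot> u = l *\<^sub>s u" shows "l = \<mu>"
proof -
  have "(\<mu> *\<^sub>s Id W + r) \<cdot> u = \<mu> *\<^sub>s u + r \<cdot> u"
    using cm_addL[OF uH sm_H[OF id_H] rH] cm_smL[OF uH id_H] idl[OF uH] by simp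
  then have "r \<cdot> u = l *\<^sub>s u - \<mu> *\<^sub>s u" using gu by (metis add_diff_cancel_left')
  then have "r \<cdot> u = (l - \<mu>) *\<^sub>s u" by (simp add: sm_ldiff)
  then have "l - \<mu> = 0" using eigR[OF rH nil uH unz] by blast
  then show ?thesis by simp
qed

lemma eig_gL: assumes rH: "r \<in> H W W" and nil: "nilpotent_mor C W r" and wH: "w \<in> H W Y"
  and wnz: "w \<noteq> 0" and gw: "w \<cdot> (\<mu> *\<^sub>s Id W + r) = l *\<^sub>s w" shows "l = \<mu>"
proof -
  have "w \<cdot> (\<mu> *\<^sub>s Id W + r) = \<mu> *\<^sub>s w + w \<cdot> r"
    using cm_addR[OF sm_H[OF id_H] rH wH] cm_smR[OF id_H wH] idr[OF wH] by simp
  then have "w \<cdot> r = l *\<^sub>s w - \<mu> *\<^sub>s w" using gw by (metis add_diff_cancel_left')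
  then have "w \<cdot> r = (l - \<mu>) *\<^sub>s w" by (simp add: sm_ldiff)
  then have "l - \<mu> = 0" using eigL[OF rH nil wH wnz] by blast
  then show ?thesis by simp
qed

lemma rad_inv: assumes "r \<in> radical C W"
  shows "\<exists>h \<in> H W W. h \<cdot> (Id W + r) = Id W \<and> (Id W + r) \<cdot> h = Id W"
proof -
  have rH: "r \<in> H W W" using assms unfolding radical_def by blast
  have gH: "(-1) *\<^sub>s Id W \<in> H W W" by (rule sm_H[OF id_H])
  have "((-1) *\<^sub>s Id W) \<cdot> r = (-1) *\<^sub>s r" using cm_smL[OF rH id_H] idl[OF rH] by simp
  also have "\<dots> = - r" using sm_neg[of 1 r] by simp
  finally have e: "Id W - ((-1) *\<^sub>s Id W) \<cdot> r = Id W + r" by simp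
  obtain h where "h \<in> H W W" "h \<cdot> (Id W - ((-1) *\<^sub>s Id W) \<cdot> r) = Id W \<and> (Id W - ((-1) *\<^sub>s Id W) \<cdot> r) \<cdot> h = Id W"
    using assms gH unfolding radical_def by blast
  then show ?thesis unfolding e by blast
qed

lemma loc: assumes ai: "abs_indecomposable C W" and nl: "\<forall>f\<in>radical C W. nilpotent_mor C W f"
  and gH: "g \<in> H W W"
  shows "\<exists>\<mu> r. r \<in> radical C W \<and> r \<in> H W W \<and> nilpotent_mor C W r \<and> g = \<mu> *\<^sub>s Id W + r"
proof -
  obtain c where c: "g - c *\<^sub>s Id W \<in> radical C W" using ai gH unfolding abs_indecomposable_def by blast
  have "g - c *\<^sub>s Id W \<in> H W W" using c unfolding radical_def by blast
  moreover have "g = c *\<^sub>s Id W + (g - c *\<^sub>s Id W)" by simp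
  ultimately show ?thesis using c nl by blast
qed

lemma dr_zero: "dr W W 0 = 0"
  using dr_sm[OF zero_H, of W W 0] by simp

lemma dr_pow: "r \<in> H W W \<Longrightarrow> (cmp C (dr W W r) ^^ n) (Id (du W)) = dr W W ((cmp C r ^^ n) (Id W))"
proof (induction n)
  case 0 then show ?case by (simp add: dr_id)
next
  case (Suc n)
  have "(cmp C (dr W W r) ^^ Suc n) (Id (du W)) = dr W W r \<cdot> dr W W ((cmp C r ^^ n) (Id W))"
    using Suc by simp
  also have "\<dots> = dr W W ((cmp C r ^^ n) (Id W) \<cdot> r)"
    using dr_cm[OF Suc.prems pow_H[OF Suc.prems]] by simp
  also have "\<dots> = dr W W ((cmp C r ^^ Suc n) (Id W))" using pow_comm[OF Suc.prems] by simp
  finally show ?case .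
qed

lemma dr_nil: "r \<in> H W W \<Longrightarrow> nilpotent_mor C W r \<Longrightarrow> nilpotent_mor C (du W) (dr W W r)"
  unfolding nilpotent_mor_def using dr_pow dr_zero by metis

end

locale mainctx = pc C for C :: "('o, 'm::ab_group_add, 'k::field) pcat" +
  fixes V :: 'o and I :: "'i set" and W :: "'i \<Rightarrow> 'o" and i p :: "'i \<Rightarrow> 'm" and j j' :: 'i
  assumes ai: "\<forall>X. indecomposable C X \<longrightarrow> abs_indecomposable C X"
    and nl: "\<forall>X. indecomposable C X \<longrightarrow> (\<forall>f \<in> radical C X. nilpotent_mor C X f)"
    and asV: "abs_simple C V"
    and dec: "decomposition C (V \<odot> du V) I W i p"
    and ind: "\<forall>k\<in>I. indecomposable C (W k)"
    and jI: "j \<in> I" and ej: "(i j \<cdot> p j) \<cdot> coev C V = coev C V"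
    and j'I: "j' \<in> I" and ej': "evt C V \<cdot> (i j' \<cdot> p j') = evt C V"
begin

lemma iH: "k \<in> I \<Longrightarrow> i k \<in> H (W k) (V \<odot> du V)" using dec unfolding decomposition_def by blast
lemma pH: "k \<in> I \<Longrightarrow> p k \<in> H (V \<odot> du V) (W k)" using dec unfolding decomposition_def by blast
lemma pi: "k \<in> I \<Longrightarrow> p k \<cdot> i k = Id (W k)" using dec unfolding decomposition_def by blast
lemma pi0: "k \<in> I \<Longrightarrow> l \<in> I \<Longrightarrow> k \<noteq> l \<Longrightarrow> p k \<cdot> i l = 0" using dec unfolding decomposition_def by blast

lemmas ij = iH[OF jI] and pj = pH[OF jI] and ij' = iH[OF j'I] and pj' = pH[OF j'I]

lemma locW: assumes "k \<in> I" "g \<in> H (W k) (W k)"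
  shows "\<exists>\<mu> r. r \<in> radical C (W k) \<and> r \<in> H (W k) (W k) \<and> nilpotent_mor C (W k) r \<and> g = \<mu> *\<^sub>s Id (W k) + r"
  using loc assms ai nl ind by blast

lemma idV_nz: "Id V \<noteq> 0"
proof
  assume z: "Id V = 0"
  have "Id (V \<odot> du V) = 0" using z tm_zeroL[OF id_H] by (simp add: idto)
  then have "i j = 0" using idl[OF ij] cm_zeroL[OF ij] by simp
  then have "Id (W j) = 0" using pi[OF jI] cm_zeroR[OF pj] by simp
  then show False using ind jI unfolding indecomposable_def by blast
qed

lemma coev_nz: "coev C V \<noteq> 0"
proof
  assume z: "coev C V = 0"
  have "Id V = (Id V \<otimes> ev C V) \<cdot> (coev C V \<otimes> Id V)" using zz1 by simp
  also have "\<dots> = 0" using z tm_zeroL[OF id_H] cm_zeroR[of "Id V \<otimes> ev C V" "V \<odot> du V \<odot> V" V]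
    by (simp add: tm_H[OF id_H ev_H, simplified])
  finally show False using idV_nz by simp
qed

lemma evt_nz: "evt C V \<noteq> 0"
proof
  assume z: "evt C V = 0"
  have "Id V = (evt C V \<otimes> Id V) \<cdot> (Id V \<otimes> coevt C V)" using zz3 by simp
  also have "\<dots> = 0" using z tm_zeroL[OF id_H] cm_zeroL[OF tm_H[OF id_H coevt_H, simplified]] by simp
  finally show False using idV_nz by simp
qed

lemma u_nz: "p j \<cdot> coev C V \<noteq> 0"
proof
  assume z: "p j \<cdot> coev C V = 0"
  have "coev C V = i j \<cdot> (p j \<cdot> coev C V)" using ej assoc[OF coev_H pj ij] by simp
  then show False using z cm_zeroR[OF ij] coev_nz by simp
qed

lemma w_nz: "evt C V \<cdot> i j' \<noteq> 0"
proof
  assume z: "evt C V \<cdot> i j' = 0"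
  have "evt C V = (evt C V \<cdot> i j') \<cdot> p j'" using ej' assoc[OF pj' ij' evt_H] by simp
  then show False using z cm_zeroL[OF pj'] evt_nz by simp
qed

lemma partA: "right_ambidextrous C V \<longleftrightarrow> j = j'"
proof
  assume RA: "right_ambidextrous C V"
  show "j = j'"
  proof (rule ccontr)
    assume ne: "j \<noteq> j'"
    have fH: "i j \<cdot> p j \<in> H (V \<odot> du V) (V \<odot> du V)" by (rule homR ij pj refl | simp)+
    have "evt C V \<cdot> (i j \<cdot> p j) = evt C V \<cdot> i j' \<cdot> (p j' \<cdot> i j) \<cdot> p j"
    proof -
      have "evt C V \<cdot> i j' \<cdot> (p j' \<cdot> i j) \<cdot> p j = (evt C V \<cdot> (i j' \<cdot> p j')) \<cdot> (i j \<cdot> p j)"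
        apply ((subst assoc[symmetric], (rule homR ij pj ij' pj' refl | simp)+)+)?
        done
      then show ?thesis using ej' by simp
    qed
    also have "\<dots> = 0" using pi0[OF j'I jI] ne cm_zeroL[OF pj] cm_zeroR[OF ij'] cm_zeroR[OF evt_H] by simp
    finally have "evt C V \<cdot> (i j \<cdot> p j) = 0 *\<^sub>s evt C V" by simp
    from RA_rhs[OF fH this] have "(inv_mor C V (du (du V)) (phi C V) \<otimes> Id (du V)) \<cdot>
        (dualm C (V \<odot> du V) (V \<odot> du V) (i j \<cdot> p j) \<cdot> coevt C (du V)) = 0" by simp
    moreover have "(i j \<cdot> p j) \<cdot> coev C V = (inv_mor C V (du (du V)) (phi C V) \<otimes> Id (du V)) \<cdot>
        (dualm C (V \<odot> du V) (V \<odot> du V) (i j \<cdot> p j) \<cdot> coevt C (du V))"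
      using RA fH unfolding right_ambidextrous_def Let_def by blast
    ultimately show False using ej coev_nz by simp
  qed
next
  assume jj: "j = j'"
  show "right_ambidextrous C V" unfolding right_ambidextrous_def Let_def
  proof
    fix f assume fH: "f \<in> H (V \<odot> du V) (V \<odot> du V)"
    obtain c where c: "evt C V \<cdot> f = c *\<^sub>s evt C V"
      using homX1[OF asV cm_H[OF fH evt_H]] by blast
    obtain a where a: "f \<cdot> coev C V = a *\<^sub>s coev C V"
      using hom1X[OF asV cm_H[OF coev_H fH]] by blast
    have gH: "p j \<cdot> f \<cdot> i j \<in> H (W j) (W j)" by (rule homR fH ij pj refl | simp)+
    obtain \<mu> r where r: "r \<in> H (W j) (W j)" "nilpotent_mor C (W j) r"
      and g: "p j \<cdot> f \<cdot> i j = \<mu> *\<^sub>s Id (W j) + r" using locW[OF jI gH] by blast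
    have "(p j \<cdot> f \<cdot> i j) \<cdot> (p j \<cdot> coev C V) = p j \<cdot> f \<cdot> ((i j \<cdot> p j) \<cdot> coev C V)"
      apply ((subst assoc[symmetric], (rule homR fH ij pj refl | simp)+)+)?
      done
    also have "\<dots> = a *\<^sub>s (p j \<cdot> coev C V)" using ej a cm_smR[OF coev_H pj] by simp
    finally have "a = \<mu>" using eig_g[OF r _ u_nz] g by (metis cm_H coev_H pj)
    have "(evt C V \<cdot> i j) \<cdot> (p j \<cdot> f \<cdot> i j) = (evt C V \<cdot> (i j \<cdot> p j)) \<cdot> f \<cdot> i j"
      apply ((subst assoc[symmetric], (rule homR fH ij pj refl | simp)+)+)?
      done
    also have "\<dots> = c *\<^sub>s (evt C V \<cdot> i j)" using jj ej' c assoc[OF ij fH evt_H] cm_smL[OF ij evt_H] by simp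
    finally have "c = \<mu>" using eig_gL[OF r _ w_nz] g jj by (metis cm_H evt_H ij)
    show "f \<cdot> coev C V = (inv_mor C V (du (du V)) (phi C V) \<otimes> Id (du V)) \<cdot>
        (dualm C (V \<odot> du V) (V \<odot> du V) f \<cdot> coevt C (du V))"
      using RA_rhs[OF fH c] a \<open>a = \<mu>\<close> \<open>c = \<mu>\<close> by simp
  qed
qed

lemma psi_H: "phi' V \<otimes> Id (du V) \<in> H (du (du V) \<odot> du V) (V \<odot> du V)" by (rule homR phi'_H refl | simp)+
lemma psii_H: "phi C V \<otimes> Id (du V) \<in> H (V \<odot> du V) (du (du V) \<odot> du V)" by (rule homR phi_H refl | simp)+
lemma psii_coev: "(phi C V \<otimes> Id (du V)) \<cdot> coev C V = coevt C (du V)"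
  using Tp_phi Tp_eq by simp
lemma coevt_nz: "coevt C (du V) \<noteq> 0"
  using psi_coevt[of V] coev_nz cm_zeroR[OF psi_H] by auto

lemma key_iso: "isomorphic C (W j) (du (W j'))"
proof -
  let ?psi = "phi' V \<otimes> Id (du V)" and ?psii = "phi C V \<otimes> Id (du V)"
  let ?is = "dr (W j') (V \<odot> du V) (i j')" and ?ps = "dr (V \<odot> du V) (W j') (p j')"
  have isH: "?is \<in> H (du (du V) \<odot> du V) (du (W j'))" using dr_H[OF ij'] by simp
  have psH: "?ps \<in> H (du (W j')) (du (du V) \<odot> du V)" using dr_H[OF pj'] by simp
  have eH: "i j' \<cdot> p j' \<in> H (V \<odot> du V) (V \<odot> du V)" by (rule homR ij' pj' refl | simp)+
  have es: "?ps \<cdot> ?is = dr (V \<odot> du V) (V \<odot> du V) (i j' \<cdot> p j')" using dr_cm[OF pj' ij'] by simp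
  have esc: "(?ps \<cdot> ?is) \<cdot> coevt C (du V) = coevt C (du V)"
    unfolding es using dr_coevt[OF eH, of 1] ej' by simp
  let ?a = "?is \<cdot> ?psii \<cdot> i j" and ?b = "p j \<cdot> ?psi \<cdot> ?ps"
  have aH: "?a \<in> H (W j) (du (W j'))" by (rule homR isH ij phi_H refl | simp)+
  have bH: "?b \<in> H (du (W j')) (W j)" by (rule homR psH pj phi'_H refl | simp)+
  have "(?b \<cdot> ?a) \<cdot> (p j \<cdot> coev C V) = p j \<cdot> ?psi \<cdot> ((?ps \<cdot> ?is) \<cdot> (?psii \<cdot> ((i j \<cdot> p j) \<cdot> coev C V)))"
    apply ((subst assoc[symmetric], (rule homR isH psH ij pj phi_H phi'_H refl | simp)+)+)?
    done
  also have "\<dots> = 1 *\<^sub>s (p j \<cdot> coev C V)"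
    unfolding ej psii_coev esc using psi_coevt by simp
  finally have bau: "(?b \<cdot> ?a) \<cdot> (p j \<cdot> coev C V) = 1 *\<^sub>s (p j \<cdot> coev C V)" .
  have baH: "?b \<cdot> ?a \<in> H (W j) (W j)" using cm_H[OF aH bH] .
  obtain \<mu> r where r: "r \<in> radical C (W j)" "r \<in> H (W j) (W j)" "nilpotent_mor C (W j) r"
    and g: "?b \<cdot> ?a = \<mu> *\<^sub>s Id (W j) + r" using locW[OF jI baH] by blast
  have "1 = \<mu>" using eig_g[OF r(2,3) cm_H[OF coev_H pj] u_nz] bau g by simp
  then have ba: "?b \<cdot> ?a = Id (W j) + r" using g by simp
  obtain h where hH: "h \<in> H (W j) (W j)" and h: "h \<cdot> (?b \<cdot> ?a) = Id (W j)" "(?b \<cdot> ?a) \<cdot> h = Id (W j)"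
    using rad_inv[OF r(1)] ba by auto
  have "(?a \<cdot> ?b) \<cdot> (?is \<cdot> coevt C (du V)) = ?is \<cdot> (?psii \<cdot> ((i j \<cdot> p j) \<cdot> (?psi \<cdot> ((?ps \<cdot> ?is) \<cdot> coevt C (du V)))))"
    apply ((subst assoc[symmetric], (rule homR isH psH ij pj phi_H phi'_H refl | simp)+)+)?
    done
  also have "\<dots> = 1 *\<^sub>s (?is \<cdot> coevt C (du V))"
    unfolding esc psi_coevt ej psii_coev by simp
  finally have abv: "(?a \<cdot> ?b) \<cdot> (?is \<cdot> coevt C (du V)) = 1 *\<^sub>s (?is \<cdot> coevt C (du V))" .
  have vH: "?is \<cdot> coevt C (du V) \<in> H One (du (W j'))" by (rule homR isH refl | simp)+
  have v_nz: "?is \<cdot> coevt C (du V) \<noteq> 0"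
  proof
    assume z: "?is \<cdot> coevt C (du V) = 0"
    have "coevt C (du V) = ?ps \<cdot> (?is \<cdot> coevt C (du V))" using esc assoc[OF coevt_H isH psH] by simp
    then show False using z cm_zeroR[OF psH] coevt_nz by simp
  qed
  have abH: "?a \<cdot> ?b \<in> H (du (W j')) (du (W j'))" using cm_H[OF bH aH] .
  obtain g0 where g0H: "g0 \<in> H (W j') (W j')" and g0: "dr (W j') (W j') g0 = ?a \<cdot> ?b"
    using drS[OF abH] by blast
  obtain \<mu>' r' where r': "r' \<in> radical C (W j')" "r' \<in> H (W j') (W j')" "nilpotent_mor C (W j') r'"
    and g': "g0 = \<mu>' *\<^sub>s Id (W j') + r'" using locW[OF j'I g0H] by blast
  have drg: "dr (W j') (W j') g0 = \<mu>' *\<^sub>s Id (du (W j')) + dr (W j') (W j') r'"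
    unfolding g' using dr_add[OF sm_H[OF id_H] r'(2)] dr_sm[OF id_H] dr_id by simp
  have "1 = \<mu>'"
    using eig_g[OF dr_H[OF r'(2)] dr_nil[OF r'(2,3)] vH v_nz] abv drg g0 by simp
  then have g0': "g0 = Id (W j') + r'" using g' by simp
  obtain h' where h'H: "h' \<in> H (W j') (W j')" and h': "h' \<cdot> g0 = Id (W j')" "g0 \<cdot> h' = Id (W j')"
    using rad_inv[OF r'(1)] g0' by auto
  let ?k = "dr (W j') (W j') h'"
  have kH: "?k \<in> H (du (W j')) (du (W j'))" using dr_H[OF h'H] .
  have abk: "(?a \<cdot> ?b) \<cdot> ?k = Id (du (W j'))"
    using g0 dr_cm[OF g0H h'H] h'(1) dr_id by simp
  have "h \<cdot> ?b = (h \<cdot> ?b) \<cdot> ((?a \<cdot> ?b) \<cdot> ?k)" using abk idr[OF cm_H[OF bH hH]] by simp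
  also have "\<dots> = (h \<cdot> (?b \<cdot> ?a)) \<cdot> (?b \<cdot> ?k)"
    apply ((subst assoc[symmetric], (rule homR isH psH ij pj phi_H phi'_H hH kH refl | simp)+)+)?
    done
  also have "\<dots> = ?b \<cdot> ?k" using h(1) idl[OF cm_H[OF kH bH]] by simp
  finally have hb: "h \<cdot> ?b = ?b \<cdot> ?k" .
  have "?a \<cdot> (h \<cdot> ?b) = Id (du (W j'))"
    unfolding hb using abk assoc[OF kH bH aH] by simp
  moreover have "(h \<cdot> ?b) \<cdot> ?a = Id (W j)"
    using h(1) assoc[OF aH bH hH] by simp
  moreover have "h \<cdot> ?b \<in> H (du (W j')) (W j)" using cm_H[OF bH hH] .
  ultimately show ?thesis unfolding isomorphic_def using aH by blast
qed

lemma iso_sym: "isomorphic C A B \<Longrightarrow> isomorphic C B A" unfolding isomorphic_def by blast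

lemma iso_trans: assumes "isomorphic C A B" "isomorphic C B D" shows "isomorphic C A D"
proof -
  obtain f g where f: "f \<in> H A B" "g \<in> H B A" "g \<cdot> f = Id A" "f \<cdot> g = Id B"
    using assms(1) unfolding isomorphic_def by blast
  obtain f' g' where f': "f' \<in> H B D" "g' \<in> H D B" "g' \<cdot> f' = Id B" "f' \<cdot> g' = Id D"
    using assms(2) unfolding isomorphic_def by blast
  have "(g \<cdot> g') \<cdot> (f' \<cdot> f) = g \<cdot> ((g' \<cdot> f') \<cdot> f)"
    apply ((subst assoc[symmetric], (rule homR f f' refl | simp)+)+)?
    done
  then have 1: "(g \<cdot> g') \<cdot> (f' \<cdot> f) = Id A" using f f' idl by simp
  have "(f' \<cdot> f) \<cdot> (g \<cdot> g') = f' \<cdot> ((f \<cdot> g) \<cdot> g')"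
    apply ((subst assoc[symmetric], (rule homR f f' refl | simp)+)+)?
    done
  then have 2: "(f' \<cdot> f) \<cdot> (g \<cdot> g') = Id D" using f f' idl by simp
  show ?thesis unfolding isomorphic_def using 1 2 cm_H f f' by blast
qed

lemma iso_reflect: assumes "isomorphic C (du A) (du B)" shows "isomorphic C B A"
proof -
  obtain s s' where s: "s \<in> H (du A) (du B)" "s' \<in> H (du B) (du A)" "s' \<cdot> s = Id (du A)" "s \<cdot> s' = Id (du B)"
    using assms unfolding isomorphic_def by blast
  obtain t where t: "t \<in> H B A" "dr B A t = s" using drS[OF s(1)] by blast
  obtain t' where t': "t' \<in> H A B" "dr A B t' = s'" using drS[OF s(2)] by blast
  have "dr B B (t' \<cdot> t) = dr B B (Id B)" using dr_cm[OF t(1) t'(1)] t t' s dr_id by simp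
  then have 1: "t' \<cdot> t = Id B" using drInj[OF cm_H[OF t(1) t'(1)] id_H] by blast
  have "dr A A (t \<cdot> t') = dr A A (Id A)" using dr_cm[OF t'(1) t(1)] t t' s dr_id by simp
  then have 2: "t \<cdot> t' = Id A" using drInj[OF cm_H[OF t'(1) t(1)] id_H] by blast
  show ?thesis unfolding isomorphic_def using t(1) t'(1) 1 2 by blast
qed

lemma mult_one: assumes kI: "k \<in> I" and iso: "isomorphic C (W j) (W k)" shows "k = j"
proof (rule ccontr)
  assume ne: "k \<noteq> j"
  obtain f g where f: "f \<in> H (W j) (W k)" "g \<in> H (W k) (W j)" "g \<cdot> f = Id (W j)"
    using iso unfolding isomorphic_def by blast
  have ik: "i k \<in> H (W k) (V \<odot> du V)" and pk: "p k \<in> H (V \<odot> du V) (W k)" using iH pH kI by auto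
  have xH: "i k \<cdot> f \<cdot> (p j \<cdot> coev C V) \<in> H One (V \<odot> du V)" by (rule homR ik f pj refl | simp)+
  obtain \<kappa> where \<kappa>: "i k \<cdot> f \<cdot> (p j \<cdot> coev C V) = \<kappa> *\<^sub>s coev C V" using hom1X[OF asV xH] by blast
  have pkc: "p k \<cdot> coev C V = 0"
  proof -
    have "p k \<cdot> coev C V = (p k \<cdot> i j) \<cdot> (p j \<cdot> coev C V)"
    proof -
      have "(p k \<cdot> i j) \<cdot> (p j \<cdot> coev C V) = p k \<cdot> ((i j \<cdot> p j) \<cdot> coev C V)"
        apply ((subst assoc[symmetric], (rule homR pk ij pj refl | simp)+)+)?
        done
      then show ?thesis using ej by simp
    qed
    also have "\<dots> = 0" using pi0[OF kI jI ne] cm_zeroL[OF cm_H[OF coev_H pj]] by simp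
    finally show ?thesis .
  qed
  have "f \<cdot> (p j \<cdot> coev C V) = (p k \<cdot> i k) \<cdot> f \<cdot> (p j \<cdot> coev C V)"
    using pi[OF kI] idl[OF cm_H[OF cm_H[OF coev_H pj] f(1)]] by simp
  also have "\<dots> = p k \<cdot> (i k \<cdot> f \<cdot> (p j \<cdot> coev C V))"
    apply ((subst assoc[symmetric], (rule homR pk ik f pj refl | simp)+)+)?
    done
  also have "\<dots> = 0" unfolding \<kappa> using cm_smR[OF coev_H pk] pkc by simp
  finally have "f \<cdot> (p j \<cdot> coev C V) = 0" .
  then have "(g \<cdot> f) \<cdot> (p j \<cdot> coev C V) = 0"
    using assoc[OF cm_H[OF coev_H pj] f(1) f(2)] cm_zeroR[OF f(2)] by simp
  then show False using f(3) idl[OF cm_H[OF coev_H pj]] u_nz by simp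
qed

lemma partB: "j = j' \<longleftrightarrow> isomorphic C (du (W j)) (W j)"
proof
  assume "j = j'"
  then show "isomorphic C (du (W j)) (W j)" using key_iso iso_sym by simp
next
  assume "isomorphic C (du (W j)) (W j)"
  then have "isomorphic C (du (W j)) (du (W j'))" using key_iso iso_trans by blast
  then have "isomorphic C (W j') (W j)" by (rule iso_reflect)
  then show "j = j'" using mult_one[OF j'I] iso_sym by metis
qed

end

theorem theorem3p3:
  fixes C :: "('o, 'm::ab_group_add, 'k::field) pcat"
    and V :: 'o and I :: "'i set" and W :: "'i \<Rightarrow> 'o"
    and i p :: "'i \<Rightarrow> 'm" and j j' :: 'i
  assumes "pivotal_kcat C" and "additive_cat C"
    and "\<forall>X. indecomposable C X \<longrightarrow> abs_indecomposable C X"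
    and "\<forall>X. indecomposable C X \<longrightarrow> (\<forall>f \<in> radical C X. nilpotent_mor C X f)"
    and "abs_simple C V"
    and "decomposition C (tobj C V (dual C V)) I W i p"
    and "\<forall>k\<in>I. indecomposable C (W k)"
    and "j \<in> I" and "cmp C (cmp C (i j) (p j)) (coev C V) = coev C V"
    and "j' \<in> I" and "cmp C (evt C V) (cmp C (i j') (p j')) = evt C V"
  shows "(right_ambidextrous C V \<longleftrightarrow> j = j') \<and>
         (j = j' \<longleftrightarrow> isomorphic C (dual C (W j)) (W j))"
proof -
  interpret mainctx C V I W i p j j'
    by (unfold_locales) (use assms in auto)
  show ?thesis using partA partB by simp
qed

end
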